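(* Let $p\in\{2,3\}$. Let $\rho_{X^{\mathrm B}X^{\mathrm C}BC}$ be a classical-quantum state where $X^{\mathrm B},X^{\mathrm C}$ are classical registers taking values in $\mathbb{F}_p^l$, and $B$ and $C$ are quantum registers held by Bob and Charlie respectively. Suppose that for any measurements Bob and Charlie perform on their registers producing outputs $G^{\mathrm B},G^{\mathrm C}$, we have $\Pr[G^{\mathrm B}=X^{\mathrm B}\wedge G^{\mathrm C}=X^{\mathrm C}]\le\delta$. Let $\mathsf{r}^{\mathrm B},\mathsf{r}^{\mathrm C}$ be independent and uniformly distributed in $\mathbb{F}_p^l$ (independent of the state), given to Bob and Charlie respectively, who then perform measurements on their quantum registers depending on $\mathsf r^{\mathrm B}$ and $\mathsf r^{\mathrm C}$ respectively, producing outputs $G^{\mathrm B}(\mathsf r^{\mathrm B}),G^{\mathrm C}(\mathsf r^{\mathrm C})\in\mathbb F_p$. Then \[\Pr\left[\bigvee_{\substack{j,k\in\mathbb F_p:\\ j+k=0 \bmod p}}\left(G^{\mathrm B}(\mathsf r^{\mathrm B})=X^{\mathrm B}\cdot\mathsf r^{\mathrm B}+j\right)\wedge\left(G^{\mathrm C}(\mathsf r^{\mathrm C})=X^{\mathrm C}\cdot\mathsf r^{\mathrm C}+k\right)\right]\le\frac1p+O(\delta^{1/3}),\] where the probability is over $X^{\mathrm B}X^{\mathrm C}$, $\mathsf r^{\mathrm B}\mathsf r^{\mathrm C}$ and the measurements, and $\cdot$ denotes the inner product over $\mathbb F_p$.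
   Context: Bob and Charlie act on their own registers only and do not communicate. The constant in $O(\cdot)$ is absolute. *)

theory Defs
  imports Complex_Main "Jordan_Normal_Form.Matrix"
begin

text \<open>Finite-dimensional quantum registers: operators are complex square matrices
  (Jordan_Normal_Form). Elements of F_p^l are lists of length l with entries in {0..<p}.\<close>

definition Fpl :: "nat \<Rightarrow> nat \<Rightarrow> nat list set" where
  "Fpl p l = {x. length x = l \<and> set x \<subseteq> {0..<p}}"

definition dotp :: "nat \<Rightarrow> nat list \<Rightarrow> nat list \<Rightarrow> nat" where
  "dotp p x r = (\<Sum>i<length x. x ! i * r ! i) mod p"

definition mtrace :: "complex mat \<Rightarrow> complex" where
  "mtrace A = (\<Sum>i<dim_row A. A $$ (i, i))"

definition psd :: "nat \<Rightarrow> complex mat \<Rightarrow> bool" where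
  "psd d A \<longleftrightarrow> A \<in> carrier_mat d d \<and>
     (\<forall>v \<in> carrier_vec d. (conjugate v \<bullet> (A *\<^sub>v v)) \<in> \<real> \<and> 0 \<le> Re (conjugate v \<bullet> (A *\<^sub>v v)))"

definition kron :: "complex mat \<Rightarrow> complex mat \<Rightarrow> complex mat" where
  "kron A B = mat (dim_row A * dim_row B) (dim_col A * dim_col B)
     (\<lambda>(i, j). A $$ (i div dim_row B, j div dim_col B) * B $$ (i mod dim_row B, j mod dim_col B))"

definition is_povm :: "nat \<Rightarrow> 'o set \<Rightarrow> ('o \<Rightarrow> complex mat) \<Rightarrow> bool" where
  "is_povm d Outs M \<longleftrightarrow> finite Outs \<and> (\<forall>w \<in> Outs. psd d (M w)) \<and>
     (\<forall>i<d. \<forall>j<d. (\<Sum>w\<in>Outs. M w $$ (i, j)) = (if i = j then 1 else 0))"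

text \<open>A cq-state on X^B X^C B C: rho xB xC is the (subnormalised) operator
  Pr[X^B = xB, X^C = xC] * rho^{BC}_{xB xC} on B (dim dB) tensor C (dim dC).\<close>
definition cq_state :: "nat \<Rightarrow> nat \<Rightarrow> nat \<Rightarrow> nat \<Rightarrow> (nat list \<Rightarrow> nat list \<Rightarrow> complex mat) \<Rightarrow> bool" where
  "cq_state p l dB dC \<rho> \<longleftrightarrow>
     (\<forall>xB \<in> Fpl p l. \<forall>xC \<in> Fpl p l. psd (dB * dC) (\<rho> xB xC)) \<and>
     (\<Sum>xB \<in> Fpl p l. \<Sum>xC \<in> Fpl p l. mtrace (\<rho> xB xC)) = 1"

definition guess_prob :: "nat \<Rightarrow> nat \<Rightarrow> (nat list \<Rightarrow> nat list \<Rightarrow> complex mat)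
    \<Rightarrow> (nat list \<Rightarrow> complex mat) \<Rightarrow> (nat list \<Rightarrow> complex mat) \<Rightarrow> real" where
  "guess_prob p l \<rho> M N =
     (\<Sum>xB \<in> Fpl p l. \<Sum>xC \<in> Fpl p l. Re (mtrace (kron (M xB) (N xC) * \<rho> xB xC)))"

definition win_event :: "nat \<Rightarrow> nat list \<Rightarrow> nat list \<Rightarrow> nat list \<Rightarrow> nat list \<Rightarrow> nat \<Rightarrow> nat \<Rightarrow> bool" where
  "win_event p xB xC rB rC a b \<longleftrightarrow>
     (\<exists>j<p. \<exists>k<p. (j + k) mod p = 0 \<and>
        a = (dotp p xB rB + j) mod p \<and> b = (dotp p xC rC + k) mod p)"

definition win_prob :: "nat \<Rightarrow> nat \<Rightarrow> (nat list \<Rightarrow> nat list \<Rightarrow> complex mat)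
    \<Rightarrow> (nat list \<Rightarrow> nat \<Rightarrow> complex mat) \<Rightarrow> (nat list \<Rightarrow> nat \<Rightarrow> complex mat) \<Rightarrow> real" where
  "win_prob p l \<rho> P Q =
     (\<Sum>xB \<in> Fpl p l. \<Sum>xC \<in> Fpl p l. \<Sum>rB \<in> Fpl p l. \<Sum>rC \<in> Fpl p l.
        (1 / real p ^ (2 * l)) *
        (\<Sum>a<p. \<Sum>b<p. if win_event p xB xC rB rC a b
            then Re (mtrace (kron (P rB a) (Q rC b) * \<rho> xB xC)) else 0))"

end

theory Submission
  imports Defs
begin


definition qf :: "nat \<Rightarrow> (nat \<Rightarrow> nat \<Rightarrow> complex) \<Rightarrow> (nat \<Rightarrow> complex) \<Rightarrow> complex" where
  "qf d B f = (\<Sum>i<d. \<Sum>j<d. cnj (f i) * B i j * f j)"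

definition QQ :: "nat \<Rightarrow> (nat \<Rightarrow> nat \<Rightarrow> complex) \<Rightarrow> bool" where
  "QQ d B \<longleftrightarrow> (\<forall>f. qf d B f \<in> \<real> \<and> 0 \<le> Re (qf d B f))"

lemma psd_QQ: assumes "psd d A" shows "QQ d (\<lambda>i j. A $$ (i,j))"
  unfolding QQ_def
proof
  fix f
  have A: "A \<in> carrier_mat d d" using assms psd_def by auto
  have "conjugate (vec d f) \<bullet> (A *\<^sub>v vec d f) = qf d (\<lambda>i j. A $$ (i,j)) f"
    using A unfolding qf_def scalar_prod_def mult_mat_vec_def
    by (auto simp: lessThan_atLeast0 sum_distrib_left mult.assoc intro!: sum.cong)
  moreover have "vec d f \<in> carrier_vec d" by simp
  ultimately show "qf d (\<lambda>i j. A $$ (i,j)) f \<in> \<real> \<and> 0 \<le> Re (qf d (\<lambda>i j. A $$ (i,j)) f)"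
    using assms unfolding psd_def by metis
qed

lemma ifz_mult1: "(if P then (x::complex) else 0) * y = (if P then x * y else 0)" by simp
lemma ifz_mult2: "y * (if P then (x::complex) else 0) = (if P then y * x else 0)" by simp
lemma ifz_cnj: "cnj (if P then (x::complex) else 0) = (if P then cnj x else 0)" by simp
lemma sum_ifP: "(\<Sum>j\<in>A. if P then g j else (0::'a::comm_monoid_add)) = (if P then sum g A else 0)" by simp
lemmas ifz = ifz_mult1 ifz_mult2 ifz_cnj sum_ifP

lemma qf_two:
  assumes "i < d" "j < d" "i \<noteq> j"
  shows "qf d B (\<lambda>k. if k = i then a else if k = j then b else 0) =
    cnj a * a * B i i + cnj a * b * B i j + cnj b * a * B j i + cnj b * b * B j j"
proof -
  have e: "(\<lambda>k. if k = i then a else if k = j then b else 0) = (\<lambda>k. (if k = i then a else 0) + (if k = j then b else 0))"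
    using assms by auto
  show ?thesis unfolding qf_def e
    using assms by (simp add: ring_distribs sum.distrib ifz sum.delta)
qed

lemma qf_one:
  assumes "i < d"
  shows "qf d B (\<lambda>k. if k = i then a else 0) = cnj a * a * B i i"
  unfolding qf_def using assms by (simp add: ifz sum.delta)

lemma QQ_diag: assumes "QQ d B" "i < d" shows "B i i \<in> \<real>" "0 \<le> Re (B i i)"
  using assms qf_one[of i d B 1] unfolding QQ_def by (metis complex_cnj_one mult_1)+

lemma QQ_herm: assumes Q: "QQ d B" and ij: "i < d" "j < d" shows "B j i = cnj (B i j)"
proof (cases "i = j")
  case True thus ?thesis using QQ_diag[OF Q ij(1)] by (simp add: Reals_cnj_iff)
next
  case False
  have r1: "qf d B (\<lambda>k. if k = i then 1 else if k = j then 1 else 0) \<in> \<real>" using Q QQ_def by blast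
  have r2: "qf d B (\<lambda>k. if k = i then 1 else if k = j then \<i> else 0) \<in> \<real>" using Q QQ_def by blast
  have di: "Im (B i i) = 0" "Im (B j j) = 0" using QQ_diag[OF Q] ij complex_is_Real_iff by auto
  from r1 have a: "Im (B i j) + Im (B j i) = 0" unfolding qf_two[OF ij False] complex_is_Real_iff using di by simp
  from r2 have b: "Re (B i j) - Re (B j i) = 0" unfolding qf_two[OF ij False] complex_is_Real_iff using di by simp
  show ?thesis using a b by (intro complex_eqI) auto
qed

lemma mult_cnj_sq: "z * cnj z = (complex_of_real (cmod z))\<^sup>2"
  using complex_norm_square[of z] by simp
lemma cnj_mult_sq: "cnj z * z = (complex_of_real (cmod z))\<^sup>2"
  using mult_cnj_sq[of z] by (simp add: mult.commute)

lemma QQ_zero: assumes Q: "QQ d B" and s: "s < d" "j < d" and z: "B s s = 0" shows "B s j = 0"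
proof (rule ccontr)
  assume nz: "B s j \<noteq> 0"
  hence js: "s \<noteq> j" using z by auto
  define N where "N = (cmod (B s j))\<^sup>2"
  have N: "N > 0" using nz N_def by simp
  define t where "t = (\<bar>Re (B j j)\<bar> + 1) / (2 * N)"
  define c where "c = - of_real t * B s j"
  have herm: "B j s = cnj (B s j)" using QQ_herm[OF Q s] .
  have "0 \<le> Re (qf d B (\<lambda>k. if k = s then c else if k = j then 1 else 0))" using Q QQ_def by blast
  also have "qf d B (\<lambda>k. if k = s then c else if k = j then 1 else 0) = cnj c * B s j + c * cnj (B s j) + B j j"
    unfolding qf_two[OF s js] herm z by simp
  also have "cnj c * B s j = - of_real (t * N)" unfolding c_def N_def
    by (simp add: mult_cnj_sq cnj_mult_sq mult.commute mult.left_commute)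
  also have "c * cnj (B s j) = - of_real (t * N)" unfolding c_def N_def
    by (simp add: mult_cnj_sq cnj_mult_sq mult.commute mult.left_commute)
  finally have "0 \<le> - 2 * t * N + Re (B j j)" by (simp add: algebra_simps)
  moreover have "2 * t * N = \<bar>Re (B j j)\<bar> + 1" unfolding t_def using N by simp
  ultimately show False by linarith
qed

lemma qf_diff: "qf d B (\<lambda>k. f k - g k) = qf d B f - (\<Sum>i<d. \<Sum>j<d. cnj (f i) * B i j * g j)
   - (\<Sum>i<d. \<Sum>j<d. cnj (g i) * B i j * f j) + qf d B g"
  unfolding qf_def by (simp add: algebra_simps sum_subtractf sum.distrib)

lemma QQ_schur: assumes Q: "QQ d B" and s: "s < d" and nz: "B s s \<noteq> 0"
  shows "QQ d (\<lambda>i j. B i j - B i s * B s j / B s s)"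
  unfolding QQ_def
proof
  fix f
  define \<beta> where "\<beta> = (\<Sum>j<d. B s j * f j)"
  define \<gamma> where "\<gamma> = (\<Sum>i<d. cnj (f i) * B i s)"
  define lam where "lam = \<beta> / B s s"
  have real: "cnj (B s s) = B s s" using QQ_diag[OF Q s] by (simp add: Reals_cnj_iff)
  have g: "\<gamma> = cnj \<beta>" unfolding \<gamma>_def \<beta>_def using QQ_herm[OF Q s] by (auto intro!: sum.cong)
  have "qf d B (\<lambda>k. f k - (if k = s then lam else 0)) = qf d B f - \<gamma> * lam - cnj lam * \<beta> + cnj lam * lam * B s s"
    unfolding qf_diff using s by (simp add: ifz sum.delta qf_one \<gamma>_def \<beta>_def sum_distrib_left sum_distrib_right algebra_simps)
  also have "\<dots> = qf d B f - \<gamma> * \<beta> / B s s"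
    unfolding lam_def g using nz real by (simp add: field_simps)
  also have "\<dots> = qf d (\<lambda>i j. B i j - B i s * B s j / B s s) f"
    unfolding qf_def \<gamma>_def \<beta>_def
    by (simp add: algebra_simps sum_subtractf sum_distrib_left sum_distrib_right sum_divide_distrib)
  finally show "qf d (\<lambda>i j. B i j - B i s * B s j / B s s) f \<in> \<real> \<and> 0 \<le> Re (qf d (\<lambda>i j. B i j - B i s * B s j / B s s) f)"
    using Q unfolding QQ_def by metis
qed

lemma gram_aux:
  "QQ d B \<Longrightarrow> (\<forall>i<d. \<forall>j<d. (i < s \<or> j < s) \<longrightarrow> B i j = 0) \<Longrightarrow> s \<le> d \<Longrightarrow>
   \<exists>G. \<forall>i<d. \<forall>j<d. B i j = (\<Sum>k<d-s. G k i * cnj (G k j))"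
proof (induction "d - s" arbitrary: s B)
  case 0
  hence "s = d" by simp
  thus ?case using 0 by auto
next
  case (Suc n)
  hence sd: "s < d" and n: "n = d - Suc s" by auto
  show ?case
  proof (cases "B s s = 0")
    case True
    have rz: "B s j = 0" if "j < d" for j using QQ_zero[OF Suc(3) sd that True] .
    have cz: "B j s = 0" if "j < d" for j using QQ_herm[OF Suc(3) sd that] rz[OF that] by simp
    have vz: "\<forall>i<d. \<forall>j<d. (i < Suc s \<or> j < Suc s) \<longrightarrow> B i j = 0"
      using Suc(4) rz cz less_Suc_eq by auto
    obtain G where G: "\<forall>i<d. \<forall>j<d. B i j = (\<Sum>k<n. G k i * cnj (G k j))"
      using Suc(1)[OF n Suc(3) vz] sd n by auto
    show ?thesis
    proof (rule exI[of _ "G(n := (\<lambda>_. 0))"], intro allI impI)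
      fix i j assume ij: "i < d" "j < d"
      have "B i j = (\<Sum>k<n. G k i * cnj (G k j))" using G ij by blast
      also have "\<dots> = (\<Sum>k<Suc n. (G(n := (\<lambda>_. 0))) k i * cnj ((G(n := (\<lambda>_. 0))) k j))"
        by (simp add: sum.lessThan_Suc)
      finally show "B i j = (\<Sum>k<d - s. (G(n := (\<lambda>_. 0))) k i * cnj ((G(n := (\<lambda>_. 0))) k j))" by (simp only: Suc(2)[symmetric])
    qed
  next
    case False
    define B' where "B' = (\<lambda>i j. B i j - B i s * B s j / B s s)"
    have Q': "QQ d B'" unfolding B'_def using QQ_schur[OF Suc(3) sd False] .
    have herm: "B j s = cnj (B s j)" if "j < d" for j using QQ_herm[OF Suc(3) sd that] .
    have vz: "\<forall>i<d. \<forall>j<d. (i < Suc s \<or> j < Suc s) \<longrightarrow> B' i j = 0"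
    proof (intro allI impI)
      fix i j assume ij: "i < d" "j < d" "i < Suc s \<or> j < Suc s"
      show "B' i j = 0"
      proof (cases "i < s \<or> j < s")
        case True
        hence "B i j = 0" using Suc(4) ij by auto
        moreover have "B i s = 0 \<or> B s j = 0" using True Suc(4) ij sd by auto
        ultimately show ?thesis unfolding B'_def by auto
      next
        case F: False
        hence "i = s \<or> j = s" using ij by auto
        thus ?thesis unfolding B'_def using False by auto
      qed
    qed
    obtain G where G: "\<forall>i<d. \<forall>j<d. B' i j = (\<Sum>k<n. G k i * cnj (G k j))"
      using Suc(1)[OF n Q' vz] sd n by auto
    define g where "g = (\<lambda>i. B i s / of_real (sqrt (Re (B s s))))"
    have real: "B s s = of_real (Re (B s s))" using QQ_diag[OF Suc(3) sd] by (simp add: complex_is_Real_iff complex_eq_iff)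
    have pos: "Re (B s s) > 0" proof -
      have "Re (B s s) \<noteq> 0" using False real by (metis of_real_0)
      thus ?thesis using QQ_diag(2)[OF Suc(3) sd] by linarith
    qed
    have gg: "g i * cnj (g j) = B i s * B s j / B s s" if "j < d" for i j
    proof -
      have "g i * cnj (g j) = B i s * cnj (B j s) / (of_real (sqrt (Re (B s s))) * of_real (sqrt (Re (B s s))))"
        unfolding g_def by simp
      also have "of_real (sqrt (Re (B s s))) * of_real (sqrt (Re (B s s))) = B s s"
        proof -
        have "of_real (sqrt (Re (B s s))) * of_real (sqrt (Re (B s s))) = (of_real (Re (B s s)) :: complex)"
          using pos by (simp flip: of_real_mult)
        thus ?thesis using real by simp
      qed
      finally show ?thesis using herm[OF that] by simp
    qed
    show ?thesis
    proof (rule exI[of _ "G(n := g)"], intro allI impI)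
      fix i j assume ij: "i < d" "j < d"
      have "B i j = B' i j + g i * cnj (g j)" unfolding B'_def gg[OF ij(2)] by simp
      also have "B' i j = (\<Sum>k<n. G k i * cnj (G k j))" using G ij by blast
      also have "(\<Sum>k<n. G k i * cnj (G k j)) + g i * cnj (g j) = (\<Sum>k<Suc n. (G(n := g)) k i * cnj ((G(n := g)) k j))"
        by (simp add: sum.lessThan_Suc)
      finally show "B i j = (\<Sum>k<d - s. (G(n := g)) k i * cnj ((G(n := g)) k j))" by (simp only: Suc(2)[symmetric])
    qed
  qed
qed

lemma gram: assumes "QQ d B" shows "\<exists>G. \<forall>i<d. \<forall>j<d. B i j = (\<Sum>k<d. G k i * cnj (G k j))"
  using gram_aux[OF assms, of 0] by simp

lemma real_CS:
  fixes x y :: "'a \<Rightarrow> real"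
  shows "(\<Sum>i\<in>S. x i * y i)\<^sup>2 \<le> (\<Sum>i\<in>S. (x i)\<^sup>2) * (\<Sum>i\<in>S. (y i)\<^sup>2)"
proof -
  have "0 \<le> (\<Sum>i\<in>S. \<Sum>j\<in>S. (x i * y j - x j * y i)\<^sup>2)" by (intro sum_nonneg) auto
  also have "\<dots> = (\<Sum>i\<in>S. \<Sum>j\<in>S. (x i)\<^sup>2 * (y j)\<^sup>2 + (x j)\<^sup>2 * (y i)\<^sup>2 - 2 * ((x i * y i) * (x j * y j)))"
    by (intro sum.cong refl) (simp add: power2_eq_square algebra_simps)
  also have "\<dots> = (\<Sum>i\<in>S. \<Sum>j\<in>S. (x i)\<^sup>2 * (y j)\<^sup>2) + (\<Sum>i\<in>S. \<Sum>j\<in>S. (x j)\<^sup>2 * (y i)\<^sup>2)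
      - 2 * (\<Sum>i\<in>S. \<Sum>j\<in>S. (x i * y i) * (x j * y j))"
    by (simp add: sum_subtractf sum.distrib sum_distrib_left)
  also have "\<dots> = 2 * ((\<Sum>i\<in>S. (x i)\<^sup>2) * (\<Sum>i\<in>S. (y i)\<^sup>2) - (\<Sum>i\<in>S. x i * y i)\<^sup>2)"
  proof -
    have a: "(\<Sum>i\<in>S. \<Sum>j\<in>S. (x i)\<^sup>2 * (y j)\<^sup>2) = (\<Sum>i\<in>S. (x i)\<^sup>2) * (\<Sum>i\<in>S. (y i)\<^sup>2)"
      by (simp add: sum_product)
    have b: "(\<Sum>i\<in>S. \<Sum>j\<in>S. (x j)\<^sup>2 * (y i)\<^sup>2) = (\<Sum>i\<in>S. (x i)\<^sup>2) * (\<Sum>i\<in>S. (y i)\<^sup>2)"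
      by (subst sum.swap) (simp add: sum_product)
    have c: "(\<Sum>i\<in>S. \<Sum>j\<in>S. (x i * y i) * (x j * y j)) = (\<Sum>i\<in>S. x i * y i)\<^sup>2"
      by (simp add: sum_product power2_eq_square)
    show ?thesis unfolding a b c by simp
  qed
  finally show ?thesis by simp
qed

lemma complex_CS:
  fixes a b :: "'a \<Rightarrow> complex"
  shows "(cmod (\<Sum>i\<in>S. cnj (a i) * b i))\<^sup>2 \<le> (\<Sum>i\<in>S. (cmod (a i))\<^sup>2) * (\<Sum>i\<in>S. (cmod (b i))\<^sup>2)"
proof -
  have "cmod (\<Sum>i\<in>S. cnj (a i) * b i) \<le> (\<Sum>i\<in>S. cmod (a i) * cmod (b i))"
    by (rule order_trans[OF norm_sum]) (simp add: norm_mult)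
  hence "(cmod (\<Sum>i\<in>S. cnj (a i) * b i))\<^sup>2 \<le> (\<Sum>i\<in>S. cmod (a i) * cmod (b i))\<^sup>2"
    by (simp add: power_mono)
  also have "\<dots> \<le> (\<Sum>i\<in>S. (cmod (a i))\<^sup>2) * (\<Sum>i\<in>S. (cmod (b i))\<^sup>2)" by (rule real_CS)
  finally show ?thesis .
qed

lemma sum_div_mod:
  fixes n m :: nat
  shows "(\<Sum>I<n*m. f (I div m) (I mod m)) = (\<Sum>a<n. \<Sum>b<m. f a b)"
proof (induction n)
  case 0 thus ?case by simp
next
  case (Suc n)
  have "{..<Suc n * m} = {..<n*m} \<union> {n*m..<n*m+m}" by auto
  hence "(\<Sum>I<Suc n*m. f (I div m) (I mod m)) = (\<Sum>I<n*m. f (I div m) (I mod m)) + (\<Sum>I\<in>{n*m..<n*m+m}. f (I div m) (I mod m))"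
    by (simp add: sum.union_disjoint ivl_disj_int)
  also have "(\<Sum>I\<in>{n*m..<n*m+m}. f (I div m) (I mod m)) = (\<Sum>b<m. f n b)"
  proof -
    have "(\<Sum>I\<in>{n*m..<n*m+m}. f (I div m) (I mod m)) = (\<Sum>b\<in>{0..<m}. f ((b + n*m) div m) ((b + n*m) mod m))"
      using sum.shift_bounds_nat_ivl[of "\<lambda>I. f (I div m) (I mod m)" 0 "n*m" m] by (simp add: add.commute)
    also have "\<dots> = (\<Sum>b<m. f n b)" by (auto simp: lessThan_atLeast0 intro!: sum.cong)
    finally show ?thesis .
  qed
  finally show ?case using Suc by simp
qed

definition Lf :: "nat \<Rightarrow> nat \<Rightarrow> (nat \<Rightarrow> nat \<Rightarrow> complex) \<Rightarrow> (nat \<Rightarrow> nat \<Rightarrow> complex) \<Rightarrow> (nat \<Rightarrow> nat \<Rightarrow> complex) \<Rightarrow> complex" where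
  "Lf n m R X Y = (\<Sum>I<n*m. \<Sum>J<n*m. X (I div m) (J div m) * Y (I mod m) (J mod m) * R J I)"

definition adjm :: "nat \<Rightarrow> (nat \<Rightarrow> nat \<Rightarrow> complex) \<Rightarrow> (nat \<Rightarrow> nat \<Rightarrow> complex)" where
  "adjm n X = (\<lambda>i j. \<Sum>a<n. cnj (X a i) * X a j)"

definition trf :: "nat \<Rightarrow> (nat \<Rightarrow> nat \<Rightarrow> complex) \<Rightarrow> complex" where
  "trf D R = (\<Sum>I<D. R I I)"

lemma mtrace_kron:
  assumes "X \<in> carrier_mat n n" "Y \<in> carrier_mat m m" "R \<in> carrier_mat (n*m) (n*m)"
  shows "mtrace (kron X Y * R) = Lf n m (\<lambda>i j. R $$ (i,j)) (\<lambda>i j. X $$ (i,j)) (\<lambda>i j. Y $$ (i,j))"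
proof -
  have dm: "I div m < n" "I mod m < m" if "I < n * m" for I
    using that by (auto simp: less_mult_imp_div_less) (metis mod_less_divisor mult_0_right nat_neq_iff not_less_zero)
  show ?thesis
    using assms unfolding mtrace_def Lf_def kron_def
    by (auto simp: scalar_prod_def lessThan_atLeast0 dm intro!: sum.cong)
qed

lemma cnj_mult_self: "cnj z * z = complex_of_real ((cmod z)\<^sup>2)"
  using cnj_mult_sq[of z] by simp

lemma Lf_gram:
  fixes n m K :: nat and w :: "nat \<Rightarrow> nat \<Rightarrow> complex"
  assumes g: "\<forall>I<n*m. \<forall>J<n*m. R I J = (\<Sum>k<K. w k I * cnj (w k J))"
  shows "Lf n m R X Y = (\<Sum>k<K. \<Sum>I<n*m. cnj (w k I) * (\<Sum>J<n*m. X (I div m) (J div m) * Y (I mod m) (J mod m) * w k J))"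
proof -
  have "Lf n m R X Y = (\<Sum>I<n*m. \<Sum>J<n*m. \<Sum>k<K. cnj (w k I) * (X (I div m) (J div m) * Y (I mod m) (J mod m) * w k J))"
    unfolding Lf_def using g by (auto simp: sum_distrib_left mult_ac intro!: sum.cong)
  also have "\<dots> = (\<Sum>I<n*m. \<Sum>k<K. \<Sum>J<n*m. cnj (w k I) * (X (I div m) (J div m) * Y (I mod m) (J mod m) * w k J))"
    by (rule sum.cong[OF refl], rule sum.swap)
  also have "\<dots> = (\<Sum>k<K. \<Sum>I<n*m. \<Sum>J<n*m. cnj (w k I) * (X (I div m) (J div m) * Y (I mod m) (J mod m) * w k J))"
    by (rule sum.swap)
  finally show ?thesis by (simp add: sum_distrib_left)
qed

lemma trf_gram:
  assumes g: "\<forall>I<D. \<forall>J<D. R I J = (\<Sum>k<K. w k I * cnj (w k J))"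
  shows "trf D R = of_real (\<Sum>k<K. \<Sum>I<D. (cmod (w k I))\<^sup>2)"
proof -
  have "trf D R = (\<Sum>I<D. \<Sum>k<K. cnj (w k I) * w k I)" unfolding trf_def using g by (auto simp: mult.commute intro!: sum.cong)
  also have "\<dots> = (\<Sum>k<K. \<Sum>I<D. cnj (w k I) * w k I)" by (rule sum.swap)
  finally show ?thesis by (simp add: cnj_mult_self)
qed

lemma adj_prod:
  fixes n m :: nat
  shows "adjm n X (I div m) (J div m) * adjm m Y (I mod m) (J mod m) =
    (\<Sum>L<n*m. cnj (X (L div m) (I div m) * Y (L mod m) (I mod m)) * (X (L div m) (J div m) * Y (L mod m) (J mod m)))"
  unfolding adjm_def sum_div_mod[where f = "\<lambda>a b. cnj (X a (I div m) * Y b (I mod m)) * (X a (J div m) * Y b (J mod m))"]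
  by (simp add: sum_product mult_ac)

lemma Lf_adj_gram:
  fixes n m K :: nat and w :: "nat \<Rightarrow> nat \<Rightarrow> complex"
  assumes g: "\<forall>I<n*m. \<forall>J<n*m. R I J = (\<Sum>k<K. w k I * cnj (w k J))"
  shows "Lf n m R (adjm n X) (adjm m Y) = of_real (\<Sum>k<K. \<Sum>L<n*m. (cmod (\<Sum>J<n*m. X (L div m) (J div m) * Y (L mod m) (J mod m) * w k J))\<^sup>2)"
proof -
  define Kx where "Kx = (\<lambda>L J. X (L div m) (J div m) * Y (L mod m) (J mod m))"
  have "Lf n m R (adjm n X) (adjm m Y) = (\<Sum>k<K. \<Sum>I<n*m. cnj (w k I) * (\<Sum>J<n*m. (\<Sum>L<n*m. cnj (Kx L I) * Kx L J) * w k J))"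
    unfolding Lf_gram[OF g] adj_prod Kx_def by (simp add: mult.assoc)
  also have "\<dots> = (\<Sum>k<K. \<Sum>I<n*m. \<Sum>J<n*m. \<Sum>L<n*m. cnj (Kx L I * w k I) * (Kx L J * w k J))"
    by (simp add: sum_distrib_left sum_distrib_right mult_ac)
  also have "\<dots> = (\<Sum>k<K. \<Sum>L<n*m. \<Sum>I<n*m. \<Sum>J<n*m. cnj (Kx L I * w k I) * (Kx L J * w k J))"
  proof (rule sum.cong[OF refl])
    fix k
    have "(\<Sum>I<n*m. \<Sum>J<n*m. \<Sum>L<n*m. cnj (Kx L I * w k I) * (Kx L J * w k J)) = (\<Sum>I<n*m. \<Sum>L<n*m. \<Sum>J<n*m. cnj (Kx L I * w k I) * (Kx L J * w k J))"
      by (rule sum.cong[OF refl], rule sum.swap)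
    also have "\<dots> = (\<Sum>L<n*m. \<Sum>I<n*m. \<Sum>J<n*m. cnj (Kx L I * w k I) * (Kx L J * w k J))"
      by (rule sum.swap)
    finally show "(\<Sum>I<n*m. \<Sum>J<n*m. \<Sum>L<n*m. cnj (Kx L I * w k I) * (Kx L J * w k J)) = (\<Sum>L<n*m. \<Sum>I<n*m. \<Sum>J<n*m. cnj (Kx L I * w k I) * (Kx L J * w k J))" .
  qed
  also have "\<dots> = (\<Sum>k<K. \<Sum>L<n*m. cnj (\<Sum>J<n*m. Kx L J * w k J) * (\<Sum>J<n*m. Kx L J * w k J))"
    by (simp only: cnj_sum sum_product)
  finally show ?thesis by (simp only: Kx_def cnj_mult_self of_real_sum)
qed

lemma Lf_CS:
  fixes n m K :: nat and w :: "nat \<Rightarrow> nat \<Rightarrow> complex"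
  assumes g: "\<forall>I<n*m. \<forall>J<n*m. R I J = (\<Sum>k<K. w k I * cnj (w k J))"
  shows "(cmod (Lf n m R X Y))\<^sup>2 \<le> Re (trf (n*m) R) * Re (Lf n m R (adjm n X) (adjm m Y))"
proof -
  define v where "v = (\<lambda>k L. \<Sum>J<n*m. X (L div m) (J div m) * Y (L mod m) (J mod m) * w k J)"
  have "Lf n m R X Y = (\<Sum>(k,I)\<in>{..<K}\<times>{..<n*m}. cnj (w k I) * v k I)"
    unfolding Lf_gram[OF g] v_def by (simp add: sum.cartesian_product)
  hence "(cmod (Lf n m R X Y))\<^sup>2 \<le> (\<Sum>(k,I)\<in>{..<K}\<times>{..<n*m}. (cmod (w k I))\<^sup>2) * (\<Sum>(k,I)\<in>{..<K}\<times>{..<n*m}. (cmod (v k I))\<^sup>2)"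
    using complex_CS[of "\<lambda>(k,I). w k I" "\<lambda>(k,I). v k I" "{..<K}\<times>{..<n*m}"] by (simp add: case_prod_unfold)
  also have "\<dots> = Re (trf (n*m) R) * Re (Lf n m R (adjm n X) (adjm m Y))"
    unfolding trf_gram[OF g] Lf_adj_gram[OF g] v_def by (simp add: sum.cartesian_product)
  finally show ?thesis .
qed

lemma divmod_lt: fixes n m I :: nat assumes "I < n * m" shows "I div m < n" "I mod m < m"
  using assms by (auto simp: less_mult_imp_div_less) (metis mod_less_divisor mult_0_right nat_neq_iff not_less_zero)

lemma Lf_cong:
  assumes "\<forall>i<n. \<forall>j<n. X i j = X' i j" "\<forall>i<m. \<forall>j<m. Y i j = Y' i j"
  shows "Lf n m R X Y = Lf n m R X' Y'"
  unfolding Lf_def using assms divmod_lt by (auto intro!: sum.cong)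

lemma gram_adjm:
  assumes "\<forall>i<n. \<forall>j<n. X i j = (\<Sum>k<n. G k i * cnj (G k j))"
  shows "\<forall>i<n. \<forall>j<n. X i j = adjm n (\<lambda>k i. cnj (G k i)) i j"
  using assms unfolding adjm_def by (simp add: mult.commute)

lemma Lf_nonneg:
  fixes n m K :: nat and w :: "nat \<Rightarrow> nat \<Rightarrow> complex"
  assumes g: "\<forall>I<n*m. \<forall>J<n*m. R I J = (\<Sum>k<K. w k I * cnj (w k J))"
    and X: "QQ n X" and Y: "QQ m Y"
  shows "Lf n m R X Y = of_real (Re (Lf n m R X Y)) \<and> 0 \<le> Re (Lf n m R X Y)"
proof -
  obtain G where G: "\<forall>i<n. \<forall>j<n. X i j = (\<Sum>k<n. G k i * cnj (G k j))" using gram[OF X] by blast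
  obtain H where H: "\<forall>i<m. \<forall>j<m. Y i j = (\<Sum>k<m. H k i * cnj (H k j))" using gram[OF Y] by blast
  have "Lf n m R X Y = Lf n m R (adjm n (\<lambda>k i. cnj (G k i))) (adjm m (\<lambda>k i. cnj (H k i)))"
    by (rule Lf_cong[OF gram_adjm[OF G] gram_adjm[OF H]])
  also note Lf_adj_gram[OF g]
  finally show ?thesis by (auto intro!: sum_nonneg)
qed

lemma Lf_sum1: "Lf n m R (\<lambda>i j. \<Sum>s\<in>S. f s i j) Y = (\<Sum>s\<in>S. Lf n m R (f s) Y)"
proof -
  have "Lf n m R (\<lambda>i j. \<Sum>s\<in>S. f s i j) Y = (\<Sum>I<n*m. \<Sum>J<n*m. \<Sum>s\<in>S. f s (I div m) (J div m) * Y (I mod m) (J mod m) * R J I)"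
    unfolding Lf_def by (simp add: sum_distrib_right)
  also have "\<dots> = (\<Sum>I<n*m. \<Sum>s\<in>S. \<Sum>J<n*m. f s (I div m) (J div m) * Y (I mod m) (J mod m) * R J I)"
    by (rule sum.cong[OF refl], rule sum.swap)
  also have "\<dots> = (\<Sum>s\<in>S. \<Sum>I<n*m. \<Sum>J<n*m. f s (I div m) (J div m) * Y (I mod m) (J mod m) * R J I)"
    by (rule sum.swap)
  finally show ?thesis unfolding Lf_def .
qed

lemma Lf_sum2: "Lf n m R X (\<lambda>i j. \<Sum>s\<in>S. f s i j) = (\<Sum>s\<in>S. Lf n m R X (f s))"
proof -
  have "Lf n m R X (\<lambda>i j. \<Sum>s\<in>S. f s i j) = (\<Sum>I<n*m. \<Sum>J<n*m. \<Sum>s\<in>S. X (I div m) (J div m) * f s (I mod m) (J mod m) * R J I)"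
    unfolding Lf_def by (simp add: sum_distrib_right sum_distrib_left)
  also have "\<dots> = (\<Sum>I<n*m. \<Sum>s\<in>S. \<Sum>J<n*m. X (I div m) (J div m) * f s (I mod m) (J mod m) * R J I)"
    by (rule sum.cong[OF refl], rule sum.swap)
  also have "\<dots> = (\<Sum>s\<in>S. \<Sum>I<n*m. \<Sum>J<n*m. X (I div m) (J div m) * f s (I mod m) (J mod m) * R J I)"
    by (rule sum.swap)
  finally show ?thesis unfolding Lf_def .
qed

lemma Lf_scal1: "Lf n m R (\<lambda>i j. c * X i j) Y = c * Lf n m R X Y"
  unfolding Lf_def by (simp add: sum_distrib_left mult_ac)

lemma Lf_scal2: "Lf n m R X (\<lambda>i j. c * Y i j) = c * Lf n m R X Y"
  unfolding Lf_def by (simp add: sum_distrib_left mult_ac)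

lemma Lf_add1: "Lf n m R (\<lambda>i j. X i j + X' i j) Y = Lf n m R X Y + Lf n m R X' Y"
  unfolding Lf_def by (simp add: sum.distrib algebra_simps)

lemma Lf_add2: "Lf n m R X (\<lambda>i j. Y i j + Y' i j) = Lf n m R X Y + Lf n m R X Y'"
  unfolding Lf_def by (simp add: sum.distrib algebra_simps)

lemma qf_gram:
  assumes "\<forall>i<d. \<forall>j<d. B i j = (\<Sum>k<K. G k i * cnj (G k j))"
  shows "qf d B f = of_real (\<Sum>k<K. (cmod (\<Sum>j<d. cnj (G k j) * f j))\<^sup>2)"
proof -
  have "qf d B f = (\<Sum>i<d. \<Sum>j<d. \<Sum>k<K. cnj (cnj (G k i) * f i) * (cnj (G k j) * f j))"
    unfolding qf_def using assms by (auto simp: sum_distrib_left sum_distrib_right mult_ac intro!: sum.cong)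
  also have "\<dots> = (\<Sum>i<d. \<Sum>k<K. \<Sum>j<d. cnj (cnj (G k i) * f i) * (cnj (G k j) * f j))"
    by (rule sum.cong[OF refl], rule sum.swap)
  also have "\<dots> = (\<Sum>k<K. \<Sum>i<d. \<Sum>j<d. cnj (cnj (G k i) * f i) * (cnj (G k j) * f j))"
    by (rule sum.swap)
  also have "\<dots> = (\<Sum>k<K. cnj (\<Sum>j<d. cnj (G k j) * f j) * (\<Sum>j<d. cnj (G k j) * f j))"
    by (simp only: cnj_sum sum_product)
  finally show ?thesis by (simp only: cnj_mult_self of_real_sum)
qed

lemma sum_prod_nested: "sum f (A \<times> B) = (\<Sum>a\<in>A. \<Sum>b\<in>B. f (a, b))"
  by (simp add: sum.cartesian_product)

lemma qf_delta: "qf d (\<lambda>i j. if i = j then 1 else 0) f = of_real (\<Sum>j<d. (cmod (f j))\<^sup>2)"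
  unfolding qf_def by (simp add: ifz sum.delta mult_cnj_sq cnj_mult_sq cong: if_cong)

lemma qf_sum: "qf d (\<lambda>i j. \<Sum>a\<in>S. P a i j) f = (\<Sum>a\<in>S. qf d (P a) f)"
proof -
  have "qf d (\<lambda>i j. \<Sum>a\<in>S. P a i j) f = (\<Sum>i<d. \<Sum>j<d. \<Sum>a\<in>S. cnj (f i) * P a i j * f j)"
    unfolding qf_def by (simp add: sum_distrib_left sum_distrib_right)
  also have "\<dots> = (\<Sum>i<d. \<Sum>a\<in>S. \<Sum>j<d. cnj (f i) * P a i j * f j)"
    by (rule sum.cong[OF refl], rule sum.swap)
  also have "\<dots> = (\<Sum>a\<in>S. \<Sum>i<d. \<Sum>j<d. cnj (f i) * P a i j * f j)"
    by (rule sum.swap)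
  finally show ?thesis unfolding qf_def .
qed

lemma qf_cong: "(\<forall>i<d. \<forall>j<d. B i j = B' i j) \<Longrightarrow> qf d B f = qf d B' f"
  unfolding qf_def by auto

lemma kadison:
  fixes P :: "nat \<Rightarrow> nat \<Rightarrow> nat \<Rightarrow> complex" and p n :: nat
  assumes G: "\<forall>a<p. \<forall>i<n. \<forall>j<n. P a i j = (\<Sum>k<n. G a k i * cnj (G a k j))"
    and sumI: "\<forall>i<n. \<forall>j<n. (\<Sum>a<p. P a i j) = (if i = j then 1 else 0)"
    and c: "\<forall>a<p. cmod (c a) = 1"
  shows "(\<Sum>k<n. (cmod (\<Sum>j<n. (\<Sum>a<p. c a * P a k j) * f j))\<^sup>2) \<le> (\<Sum>j<n. (cmod (f j))\<^sup>2)"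
proof -
  define h where "h = (\<lambda>k. \<Sum>j<n. (\<Sum>a<p. c a * P a k j) * f j)"
  define H where "H = (\<Sum>k<n. (cmod (h k))\<^sup>2)"
  define F where "F = (\<Sum>j<n. (cmod (f j))\<^sup>2)"
  define \<alpha> where "\<alpha> = (\<lambda>(a,\<kappa>). \<Sum>k<n. cnj (h k) * G a \<kappa> k)"
  define \<beta> where "\<beta> = (\<lambda>(a,\<kappa>). \<Sum>j<n. cnj (G a \<kappa> j) * f j)"
  let ?N = "{..<p} \<times> {..<n}"
  have sumq: "(\<Sum>a<p. qf n (P a) g) = of_real (\<Sum>j<n. (cmod (g j))\<^sup>2)" for g
  proof -
    have "(\<Sum>a<p. qf n (P a) g) = qf n (\<lambda>i j. \<Sum>a<p. P a i j) g" by (rule qf_sum[symmetric])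
    also have "\<dots> = qf n (\<lambda>i j. if i = j then 1 else 0) g" using sumI by (intro qf_cong) auto
    finally show ?thesis by (simp add: qf_delta)
  qed
  have qa: "qf n (P a) g = of_real (\<Sum>k<n. (cmod (\<Sum>j<n. cnj (G a k j) * g j))\<^sup>2)" if "a < p" for a g
    by (rule qf_gram) (use G that in auto)
  have Fb: "(\<Sum>i\<in>?N. (cmod (\<beta> i))\<^sup>2) = F"
  proof -
    have "of_real (\<Sum>i\<in>?N. (cmod (\<beta> i))\<^sup>2) = (\<Sum>a<p. qf n (P a) f)"
      unfolding \<beta>_def sum_prod_nested by (simp add: qa)
    thus ?thesis unfolding sumq F_def by (simp only: of_real_eq_iff)
  qed
  have Ha: "(\<Sum>i\<in>?N. (cmod (\<alpha> i))\<^sup>2) = H"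
  proof -
    have e: "cmod (\<alpha> (a,k)) = cmod (\<Sum>j<n. cnj (G a k j) * h j)" for a k
    proof -
      have "\<alpha> (a,k) = cnj (\<Sum>j<n. cnj (G a k j) * h j)" unfolding \<alpha>_def by (simp add: mult.commute)
      thus ?thesis by (simp only: complex_mod_cnj)
    qed
    have "of_real (\<Sum>i\<in>?N. (cmod (\<alpha> i))\<^sup>2) = (\<Sum>a<p. qf n (P a) h)"
      unfolding sum_prod_nested by (simp add: qa e)
    thus ?thesis unfolding sumq H_def by (simp only: of_real_eq_iff)
  qed
  have "of_real H = (\<Sum>k<n. cnj (h k) * h k)" unfolding H_def by (simp add: cnj_mult_self)
  also have "\<dots> = (\<Sum>k<n. \<Sum>j<n. \<Sum>a<p. \<Sum>\<kappa><n. c a * (cnj (h k) * G a \<kappa> k) * (cnj (G a \<kappa> j) * f j))"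
  proof (rule sum.cong[OF refl])
    fix k assume k: "k \<in> {..<n}"
    have "h k = (\<Sum>j<n. \<Sum>a<p. \<Sum>\<kappa><n. c a * G a \<kappa> k * (cnj (G a \<kappa> j) * f j))"
      unfolding h_def using G k by (auto simp: sum_distrib_left sum_distrib_right mult_ac intro!: sum.cong)
    hence "cnj (h k) * h k = cnj (h k) * (\<Sum>j<n. \<Sum>a<p. \<Sum>\<kappa><n. c a * G a \<kappa> k * (cnj (G a \<kappa> j) * f j))"
      by (rule arg_cong[where f="\<lambda>z. cnj (h k) * z"])
    also have "\<dots> = (\<Sum>j<n. \<Sum>a<p. \<Sum>\<kappa><n. c a * (cnj (h k) * G a \<kappa> k) * (cnj (G a \<kappa> j) * f j))"
      by (simp add: sum_distrib_left mult_ac)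
    finally show "cnj (h k) * h k = (\<Sum>j<n. \<Sum>a<p. \<Sum>\<kappa><n. c a * (cnj (h k) * G a \<kappa> k) * (cnj (G a \<kappa> j) * f j))" .
  qed
  also have "\<dots> = (\<Sum>(a,\<kappa>)\<in>?N. c a * (\<alpha> (a,\<kappa>) * \<beta> (a,\<kappa>)))"
  proof -
    have "(\<Sum>k<n. \<Sum>j<n. \<Sum>a<p. \<Sum>\<kappa><n. c a * (cnj (h k) * G a \<kappa> k) * (cnj (G a \<kappa> j) * f j))
        = (\<Sum>k<n. \<Sum>a<p. \<Sum>\<kappa><n. \<Sum>j<n. c a * (cnj (h k) * G a \<kappa> k) * (cnj (G a \<kappa> j) * f j))"
    proof (rule sum.cong[OF refl])
      fix k
      have "(\<Sum>j<n. \<Sum>a<p. \<Sum>\<kappa><n. c a * (cnj (h k) * G a \<kappa> k) * (cnj (G a \<kappa> j) * f j))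
          = (\<Sum>a<p. \<Sum>j<n. \<Sum>\<kappa><n. c a * (cnj (h k) * G a \<kappa> k) * (cnj (G a \<kappa> j) * f j))"
        by (rule sum.swap)
      also have "\<dots> = (\<Sum>a<p. \<Sum>\<kappa><n. \<Sum>j<n. c a * (cnj (h k) * G a \<kappa> k) * (cnj (G a \<kappa> j) * f j))"
        by (rule sum.cong[OF refl], rule sum.swap)
      finally show "(\<Sum>j<n. \<Sum>a<p. \<Sum>\<kappa><n. c a * (cnj (h k) * G a \<kappa> k) * (cnj (G a \<kappa> j) * f j))
          = (\<Sum>a<p. \<Sum>\<kappa><n. \<Sum>j<n. c a * (cnj (h k) * G a \<kappa> k) * (cnj (G a \<kappa> j) * f j))" .
    qed
    also have "\<dots> = (\<Sum>a<p. \<Sum>\<kappa><n. \<Sum>k<n. \<Sum>j<n. c a * (cnj (h k) * G a \<kappa> k) * (cnj (G a \<kappa> j) * f j))"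
    proof -
      have "(\<Sum>k<n. \<Sum>a<p. \<Sum>\<kappa><n. \<Sum>j<n. c a * (cnj (h k) * G a \<kappa> k) * (cnj (G a \<kappa> j) * f j))
        = (\<Sum>a<p. \<Sum>k<n. \<Sum>\<kappa><n. \<Sum>j<n. c a * (cnj (h k) * G a \<kappa> k) * (cnj (G a \<kappa> j) * f j))"
        by (rule sum.swap)
      also have "\<dots> = (\<Sum>a<p. \<Sum>\<kappa><n. \<Sum>k<n. \<Sum>j<n. c a * (cnj (h k) * G a \<kappa> k) * (cnj (G a \<kappa> j) * f j))"
        by (rule sum.cong[OF refl], rule sum.swap)
      finally show ?thesis .
    qed
    also have "\<dots> = (\<Sum>(a,\<kappa>)\<in>?N. c a * (\<alpha> (a,\<kappa>) * \<beta> (a,\<kappa>)))"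
      unfolding \<alpha>_def \<beta>_def sum_prod_nested
      by (simp only: split sum_product) (simp only: sum_distrib_left mult.assoc)
    finally show ?thesis .
  qed
  finally have eqH: "of_real H = (\<Sum>i\<in>?N. cnj (cnj (c (fst i) * \<alpha> i)) * \<beta> i)"
    by (simp add: case_prod_unfold mult.assoc)
  have "H\<^sup>2 = (cmod (of_real H))\<^sup>2" by simp
  also have "\<dots> \<le> (\<Sum>i\<in>?N. (cmod (cnj (c (fst i) * \<alpha> i)))\<^sup>2) * (\<Sum>i\<in>?N. (cmod (\<beta> i))\<^sup>2)"
    unfolding eqH by (rule complex_CS)
  also have "(\<Sum>i\<in>?N. (cmod (cnj (c (fst i) * \<alpha> i)))\<^sup>2) = (\<Sum>i\<in>?N. (cmod (\<alpha> i))\<^sup>2)"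
    using c by (intro sum.cong refl) (auto simp: norm_mult)
  finally have "H * H \<le> H * F" unfolding Ha Fb by (simp add: power2_eq_square)
  moreover have "H \<ge> 0" unfolding H_def by (auto intro: sum_nonneg)
  moreover have "F \<ge> 0" unfolding F_def by (auto intro: sum_nonneg)
  ultimately have "H \<le> F"
  proof (cases "H = 0")
    case False thus ?thesis using \<open>H * H \<le> H * F\<close> \<open>H \<ge> 0\<close> by (simp add: mult_le_cancel_left)
  qed simp
  thus ?thesis unfolding H_def F_def h_def .
qed


lemma small_dvd: fixes p t b b' :: nat
  assumes "p = 2 \<or> p = 3" "0 < t" "t < p" "b < p" "b' < p"
  shows "p dvd t * (b + (p - 1) * b') \<longleftrightarrow> b = b'"
proof -
  have "t \<in> {1,2}" "b \<in> {0,1,2}" "b' \<in> {0,1,2}" using assms by auto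
  thus ?thesis using assms by (auto simp: numeral_eq_Suc dvd_def) presburger+
qed

definition om :: "nat \<Rightarrow> complex" where "om p = cis (2 * pi / real p)"

lemma om_p: assumes "p > 0" shows "om p ^ p = 1"
  using assms unfolding om_def DeMoivre by simp

lemma om_mod: assumes "p > 0" shows "om p ^ k = om p ^ (k mod p)"
proof -
  have "om p ^ k = om p ^ (p * (k div p) + k mod p)" by simp
  also have "\<dots> = (om p ^ p) ^ (k div p) * om p ^ (k mod p)" by (simp only: power_add power_mult)
  finally show ?thesis using om_p[OF assms] by simp
qed

lemma om_norm [simp]: "cmod (om p) = 1" unfolding om_def by simp

lemma cnj_om: assumes "p > 0" shows "cnj (om p) = om p ^ (p - 1)"
proof -
  have a: "om p ^ (p - 1) * om p = 1" using om_p[OF assms] assms power_Suc2[of "om p" "p - 1"] by simp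
  have b: "om p * cnj (om p) = 1" using complex_norm_square[of "om p"] by simp
  have "om p ^ (p - 1) = om p ^ (p - 1) * (om p * cnj (om p))" using b by simp
  also have "\<dots> = cnj (om p)" using a by (simp add: mult.assoc[symmetric])
  finally show ?thesis by simp
qed

lemma cnj_om_pow: assumes "p > 0" shows "cnj (om p) ^ k = om p ^ ((p - 1) * k)"
  using cnj_om[OF assms] by (simp add: power_mult)

lemma om_eq_1: assumes "p > 0" shows "om p ^ k = 1 \<longleftrightarrow> p dvd k"
proof
  assume "p dvd k" then obtain q where "k = p * q" by auto
  thus "om p ^ k = 1" using om_p[OF assms] by (simp add: power_mult)
next
  assume h: "om p ^ k = 1"
  show "p dvd k"
  proof (rule ccontr)
    assume nd: "\<not> p dvd k"
    define r where "r = k mod p"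
    have r: "0 < r" "r < p" using nd assms unfolding r_def by (auto simp: dvd_eq_mod_eq_0)
    have "om p ^ r = 1" using h om_mod[OF assms, of k] r_def by simp
    hence "cis (real r * (2 * pi / real p)) = 1" unfolding om_def DeMoivre .
    hence "cos (real r * (2 * pi / real p)) = 1" by (metis cis.sel(1) one_complex.sel(1))
    from cos_one_2pi_int[THEN iffD1, OF this]
    obtain z :: int where z: "real r * (2 * pi / real p) = real_of_int z * 2 * pi" by blast
    hence "real r / real p = z" using assms by (simp add: field_simps)
    moreover have "0 < real r / real p" "real r / real p < 1" using r by auto
    ultimately have "0 < z" "z < 1" by simp_all
    thus False by simp
  qed
qed

lemma geo_om: assumes "p > 0" shows "(\<Sum>t<p. om p ^ (t * k)) = (if p dvd k then of_nat p else 0)"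
proof (cases "p dvd k")
  case True
  hence k1: "om p ^ k = 1" using om_eq_1[OF assms] by simp
  have "om p ^ (t * k) = 1" for t
  proof -
    have "om p ^ (t * k) = (om p ^ k) ^ t" by (simp only: mult.commute[of t k] power_mult)
    thus ?thesis using k1 by simp
  qed
  thus ?thesis using True by simp
next
  case False
  hence z: "om p ^ k \<noteq> 1" using om_eq_1[OF assms] by simp
  have "(\<Sum>t<p. om p ^ (t * k)) = (\<Sum>t<p. (om p ^ k) ^ t)" by (simp only: mult.commute[of _ k] power_mult)
  also have "\<dots> = ((om p ^ k) ^ p - 1) / (om p ^ k - 1)" using geometric_sum[OF z] .
  also have "(om p ^ k) ^ p = 1"
  proof -
    have "(om p ^ k) ^ p = (om p ^ p) ^ k" by (simp only: power_mult[symmetric] mult.commute)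
    thus ?thesis using om_p[OF assms] by simp
  qed
  finally show ?thesis using False by simp
qed
lemma Fpl_0: "Fpl p 0 = {[]}" unfolding Fpl_def by auto

lemma Fpl_Suc: "Fpl p (Suc l) = (\<lambda>(a,x). a # x) ` ({..<p} \<times> Fpl p l)"
proof (intro equalityI subsetI)
  fix y assume "y \<in> Fpl p (Suc l)"
  then obtain a x where "y = a # x" "a < p" "x \<in> Fpl p l" unfolding Fpl_def by (cases y) auto
  thus "y \<in> (\<lambda>(a,x). a # x) ` ({..<p} \<times> Fpl p l)" by force
qed (auto simp: Fpl_def)

lemma inj_cons: "inj_on (\<lambda>(a,x). a # x) S" by (auto simp: inj_on_def)

lemma Fpl_finite: "finite (Fpl p l)"
  by (induction l) (auto simp: Fpl_0 Fpl_Suc)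

lemma card_Fpl: "card (Fpl p l) = p ^ l"
  by (induction l) (auto simp: Fpl_0 Fpl_Suc card_image[OF inj_cons] card_cartesian_product)

lemma Fpl_ne: "replicate l 0 \<in> Fpl p l" if "p > 0" using that unfolding Fpl_def by auto

definition rd :: "nat list \<Rightarrow> nat list \<Rightarrow> nat" where "rd x r = (\<Sum>i<length x. x ! i * r ! i)"

lemma dotp_rd: "dotp p x r = rd x r mod p" unfolding dotp_def rd_def by simp

lemma rd_Cons: "rd (a # x) (b # r) = a * b + rd x r"
  unfolding rd_def length_Cons sum.lessThan_Suc_shift by simp

lemma om_mult_mod: assumes "p > 0" shows "om p ^ (t * (q mod p)) = om p ^ (t * q)"
proof -
  have "om p ^ (t * (q mod p)) = om p ^ ((t * (q mod p)) mod p)" by (rule om_mod[OF assms])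
  also have "(t * (q mod p)) mod p = (t * q) mod p" by (simp add: mod_mult_right_eq)
  also have "om p ^ ((t * q) mod p) = om p ^ (t * q)" by (rule om_mod[OF assms, symmetric])
  finally show ?thesis .
qed

lemma char_orth_rd:
  assumes p: "p = 2 \<or> p = 3" and t: "0 < t" "t < p"
  shows "r \<in> Fpl p l \<Longrightarrow> r' \<in> Fpl p l \<Longrightarrow>
    (\<Sum>x\<in>Fpl p l. om p ^ (t * rd x r + (p - 1) * (t * rd x r'))) = (if r = r' then of_nat (p ^ l) else 0)"
proof (induction l arbitrary: r r')
  case 0 thus ?case by (simp add: Fpl_0 rd_def)
next
  case (Suc l)
  have p0: "p > 0" using p by auto
  obtain b s where r: "r = b # s" "b < p" "s \<in> Fpl p l" using Suc(2) unfolding Fpl_def by (cases r) auto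
  obtain b' s' where r': "r' = b' # s'" "b' < p" "s' \<in> Fpl p l" using Suc(3) unfolding Fpl_def by (cases r') auto
  obtain q where q: "q = p - 1" by blast
  define k where "k = t * (b + q * b')"
  have ex: "t * (a * b + R) + q * (t * (a * b' + R')) = a * k + (t * R + q * (t * R'))" for a R R'
    unfolding k_def by (simp add: algebra_simps)
  have "(\<Sum>x\<in>Fpl p (Suc l). om p ^ (t * rd x r + (p - 1) * (t * rd x r')))
      = (\<Sum>(a,x)\<in>{..<p} \<times> Fpl p l. om p ^ (t * rd (a # x) r + q * (t * rd (a # x) r')))"
    unfolding Fpl_Suc q by (subst sum.reindex[OF inj_cons]) (simp add: case_prod_unfold)
  also have "\<dots> = (\<Sum>(a,x)\<in>{..<p} \<times> Fpl p l. om p ^ (a * k) * om p ^ (t * rd x s + q * (t * rd x s')))"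
    unfolding r(1) r'(1) rd_Cons ex by (simp add: power_add)
  also have "\<dots> = (\<Sum>a<p. om p ^ (a * k)) * (\<Sum>x\<in>Fpl p l. om p ^ (t * rd x s + q * (t * rd x s')))"
    by (simp add: sum_product sum.cartesian_product)
  also have "(\<Sum>a<p. om p ^ (a * k)) = (if b = b' then of_nat p else 0)"
    unfolding geo_om[OF p0] k_def q using small_dvd[OF p t r(2) r'(2)] by simp
  also have "(\<Sum>x\<in>Fpl p l. om p ^ (t * rd x s + q * (t * rd x s'))) = (if s = s' then of_nat (p ^ l) else 0)"
    using Suc.IH[OF r(3) r'(3)] q by simp
  finally show ?case using r r' by auto
qed

lemma char_orth:
  assumes p: "p = 2 \<or> p = 3" and t: "0 < t" "t < p" and r: "r \<in> Fpl p l" "r' \<in> Fpl p l"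
  shows "(\<Sum>x\<in>Fpl p l. om p ^ (t * dotp p x r) * cnj (om p) ^ (t * dotp p x r')) = (if r = r' then of_nat (p ^ l) else 0)"
proof -
  have p0: "p > 0" using p by auto
  have "om p ^ (t * dotp p x r) * cnj (om p) ^ (t * dotp p x r') = om p ^ (t * rd x r + (p - 1) * (t * rd x r'))" for x
    unfolding cnj_om_pow[OF p0] dotp_rd om_mult_mod[OF p0] power_add
    using om_mult_mod[OF p0, of "(p - 1) * t" "rd x r'"] by (simp add: mult.assoc)
  thus ?thesis using char_orth_rd[OF p t r] by simp
qed


lemma mod_cancel_nat: fixes Z w p :: nat assumes "(Z + w) mod p = w mod p" shows "p dvd Z"
proof -
  have "p dvd (Z + w) - w" using mod_eq_dvd_iff_nat[of w "Z + w" p] assms by linarith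
  thus ?thesis by simp
qed

lemma dvd_cong_aux: fixes p a s :: nat assumes "p > 0"
  shows "p dvd (a + (p - 1) * s) \<longleftrightarrow> a mod p = s mod p"
proof -
  have e: "(a + (p - 1) * s) + s = a + p * s" using assms by (cases p) auto
  have m: "((a + (p - 1) * s) + s) mod p = a mod p" unfolding e by simp
  show ?thesis
  proof
    assume "p dvd (a + (p - 1) * s)"
    then obtain q where q: "a + (p - 1) * s = p * q" by blast
    have "((a + (p - 1) * s) + s) mod p = s mod p" unfolding q by simp
    thus "a mod p = s mod p" using m by simp
  next
    assume "a mod p = s mod p"
    thus "p dvd (a + (p - 1) * s)" using m by (intro mod_cancel_nat[of _ s]) simp
  qed
qed


lemma dotp_lt: "p > 0 \<Longrightarrow> dotp p x r < p" unfolding dotp_def by simp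

lemma win_iff: assumes p: "p > 0" and ab: "a < p" "b < p"
  shows "win_event p xB xC rB rC a b \<longleftrightarrow> (a + b) mod p = (dotp p xB rB + dotp p xC rC) mod p"
proof
  assume w: "win_event p xB xC rB rC a b"
  obtain j k where jk: "(j + k) mod p = 0" "a = (dotp p xB rB + j) mod p" "b = (dotp p xC rC + k) mod p"
    using w[unfolded win_event_def] by (elim exE conjE) (simp only:)
  have "(a + b) mod p = ((dotp p xB rB + j) + (dotp p xC rC + k)) mod p"
    unfolding jk(2,3) by (rule mod_add_eq)
  also have "((dotp p xB rB + j) + (dotp p xC rC + k)) mod p = (dotp p xB rB + dotp p xC rC + (j + k)) mod p"
    by (simp only: add_ac)
  also have "\<dots> = (dotp p xB rB + dotp p xC rC + (j + k) mod p) mod p"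
    by (rule mod_add_right_eq[symmetric])
  also have "\<dots> = (dotp p xB rB + dotp p xC rC) mod p"
    unfolding jk(1) by simp
  finally show "(a + b) mod p = (dotp p xB rB + dotp p xC rC) mod p" .
next
  assume h: "(a + b) mod p = (dotp p xB rB + dotp p xC rC) mod p"
  define dx where "dx = dotp p xB rB"
  define dy where "dy = dotp p xC rC"
  have d: "dx < p" "dy < p" unfolding dx_def dy_def using dotp_lt[OF p] by auto
  define j where "j = (a + (p - dx)) mod p"
  define k where "k = (b + (p - dy)) mod p"
  have "a = (dx + j) mod p"
  proof -
    have "(dx + j) mod p = (dx + (a + (p - dx))) mod p" unfolding j_def by (rule mod_add_right_eq)
    also have "(dx + (a + (p - dx))) mod p = a"
    proof -
      have "dx + (a + (p - dx)) = a + p" using d by simp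
      thus ?thesis using ab by simp
    qed
    finally show ?thesis by simp
  qed
  moreover have "b = (dy + k) mod p"
  proof -
    have "(dy + k) mod p = (dy + (b + (p - dy))) mod p" unfolding k_def by (rule mod_add_right_eq)
    also have "(dy + (b + (p - dy))) mod p = b"
    proof -
      have "dy + (b + (p - dy)) = b + p" using d by simp
      thus ?thesis using ab by simp
    qed
    finally show ?thesis by simp
  qed
  moreover have "(j + k) mod p = 0"
  proof -
    define Z where "Z = (a + (p - dx)) + (b + (p - dy))"
    have "Z + (dx + dy) = (a + b) + 2 * p" unfolding Z_def using d by simp
    hence "(Z + (dx + dy)) mod p = ((a + b) + 2 * p) mod p" by (rule arg_cong[where f="\<lambda>x. x mod p"])
    also have "\<dots> = (a + b) mod p" by (rule mod_mult_self1)
    also have "\<dots> = (dx + dy) mod p" using h unfolding dx_def dy_def .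
    finally have "(Z + (dx + dy)) mod p = (dx + dy) mod p" .
    hence "p dvd Z" by (rule mod_cancel_nat)
    moreover have "(j + k) mod p = Z mod p" unfolding j_def k_def Z_def by (rule mod_add_eq)
    ultimately show ?thesis by simp
  qed
  moreover have "j < p" "k < p" unfolding j_def k_def using p by auto
  ultimately have W: "j < p" "k < p" "(j + k) mod p = 0" "a = (dotp p xB rB + j) mod p" "b = (dotp p xC rC + k) mod p"
    unfolding dx_def dy_def by auto
  show "win_event p xB xC rB rC a b" unfolding win_event_def
    by (intro exI[where x=j] exI[where x=k] conjI W)
qed


lemma QQ_cong: "QQ d B \<Longrightarrow> (\<forall>i<d. \<forall>j<d. B i j = B' i j) \<Longrightarrow> QQ d B'"
proof -
  assume a: "QQ d B" "\<forall>i<d. \<forall>j<d. B i j = B' i j"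
  have "qf d B f = qf d B' f" for f using qf_cong[OF a(2)] .
  thus ?thesis using a(1) unfolding QQ_def by simp
qed

lemma QQ_add: "QQ d B \<Longrightarrow> QQ d B' \<Longrightarrow> QQ d (\<lambda>i j. B i j + B' i j)"
proof -
  assume a: "QQ d B" "QQ d B'"
  have "qf d (\<lambda>i j. B i j + B' i j) f = qf d B f + qf d B' f" for f
    unfolding qf_def by (simp add: algebra_simps sum.distrib)
  thus ?thesis using a unfolding QQ_def by (auto simp: complex_is_Real_iff)
qed

lemma QQ_psd: assumes "A \<in> carrier_mat d d" "QQ d (\<lambda>i j. A $$ (i,j))" shows "psd d A"
  unfolding psd_def
proof (intro conjI ballI assms(1))
  fix v :: "complex vec" assume v: "v \<in> carrier_vec d"
  have "conjugate v \<bullet> (A *\<^sub>v v) = qf d (\<lambda>i j. A $$ (i,j)) (\<lambda>i. v $ i)"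
    using assms(1) v unfolding qf_def scalar_prod_def mult_mat_vec_def
    by (auto simp: lessThan_atLeast0 sum_distrib_left mult.assoc intro!: sum.cong)
  thus "conjugate v \<bullet> (A *\<^sub>v v) \<in> \<real>" "0 \<le> Re (conjugate v \<bullet> (A *\<^sub>v v))"
    using assms(2) unfolding QQ_def by auto
qed

lemma qf_adjm: "qf n (adjm n X) f = of_real (\<Sum>k<n. (cmod (\<Sum>j<n. X k j * f j))\<^sup>2)"
proof -
  have "\<forall>i<n. \<forall>j<n. adjm n X i j = (\<Sum>k<n. cnj (X k i) * cnj (cnj (X k j)))" unfolding adjm_def by simp
  from qf_gram[OF this] show ?thesis by simp
qed

lemma QQ_adjm: "QQ n (adjm n X)"
  unfolding QQ_def qf_adjm by (auto intro: sum_nonneg)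

lemma qf_scal: "qf d (\<lambda>i j. c * B i j) f = c * qf d B f"
  unfolding qf_def by (simp add: sum_distrib_left mult_ac)

lemma Lf_delta:
  fixes n m :: nat
  shows "Lf n m R (\<lambda>i j. if i = j then 1 else 0) (\<lambda>i j. if i = j then 1 else 0) = trf (n*m) R"
proof -
  have e: "(I div m = J div m \<and> I mod m = J mod m) \<longleftrightarrow> I = J" for I J :: nat
  proof
    assume "I div m = J div m \<and> I mod m = J mod m"
    hence "I div m * m + I mod m = J div m * m + J mod m" by simp
    thus "I = J" by simp
  qed simp
  have "Lf n m R (\<lambda>i j. if i = j then 1 else 0) (\<lambda>i j. if i = j then 1 else 0) = (\<Sum>I<n*m. \<Sum>J<n*m. if I = J then R J I else 0)"
    unfolding Lf_def by (intro sum.cong refl) (use e in auto)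
  also have "\<dots> = trf (n*m) R" unfolding trf_def by (simp add: sum.delta)
  finally show ?thesis .
qed

lemma mtrace_trf: "R \<in> carrier_mat D D \<Longrightarrow> mtrace R = trf D (\<lambda>i j. R $$ (i,j))"
  unfolding mtrace_def trf_def by simp



lemma swap_T_in: "(\<Sum>t\<in>T. \<Sum>x\<in>A. \<Sum>y\<in>B. \<Sum>r\<in>C. \<Sum>r'\<in>D. \<Sum>a\<in>E. \<Sum>b\<in>G. f t x y r r' a b) =
  (\<Sum>x\<in>A. \<Sum>y\<in>B. \<Sum>r\<in>C. \<Sum>r'\<in>D. \<Sum>a\<in>E. \<Sum>b\<in>G. \<Sum>t\<in>T. f t x y r r' a b)"
  by (simp only: sum.swap[where A=T])

lemma swap4: "(\<Sum>x\<in>A. \<Sum>k\<in>B. \<Sum>r\<in>C. \<Sum>r'\<in>D. g x k r r') = (\<Sum>k\<in>B. \<Sum>r\<in>C. \<Sum>r'\<in>D. \<Sum>x\<in>A. g x k r r')"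
proof -
  have "(\<Sum>x\<in>A. \<Sum>k\<in>B. \<Sum>r\<in>C. \<Sum>r'\<in>D. g x k r r') = (\<Sum>k\<in>B. \<Sum>x\<in>A. \<Sum>r\<in>C. \<Sum>r'\<in>D. g x k r r')"
    by (rule sum.swap)
  also have "\<dots> = (\<Sum>k\<in>B. \<Sum>r\<in>C. \<Sum>x\<in>A. \<Sum>r'\<in>D. g x k r r')"
    by (rule sum.cong[OF refl], rule sum.swap)
  also have "\<dots> = (\<Sum>k\<in>B. \<Sum>r\<in>C. \<Sum>r'\<in>D. \<Sum>x\<in>A. g x k r r')"
    by (rule sum.cong[OF refl], rule sum.cong[OF refl], rule sum.swap)
  finally show ?thesis .
qed

locale LS =
  fixes p l n m :: nat and \<rho> :: "nat list \<Rightarrow> nat list \<Rightarrow> complex mat"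
    and P Q :: "nat list \<Rightarrow> nat \<Rightarrow> complex mat"
  assumes hp: "p = 2 \<or> p = 3"
    and cq: "cq_state p l n m \<rho>"
    and hP: "\<forall>r\<in>Fpl p l. is_povm n {..<p} (P r)"
    and hQ: "\<forall>r\<in>Fpl p l. is_povm m {..<p} (Q r)"
begin

definition Rf where "Rf x y = (\<lambda>I J. \<rho> x y $$ (I,J))"
definition Pf where "Pf r a = (\<lambda>i j. P r a $$ (i,j))"
definition Qf where "Qf r b = (\<lambda>i j. Q r b $$ (i,j))"
definition c0 :: complex where "c0 = 1 / of_nat (p ^ l)"
definition Af where "Af t r = (\<lambda>i j. \<Sum>a<p. om p ^ (t * a) * Pf r a i j)"
definition Bf where "Bf t r = (\<lambda>i j. \<Sum>b<p. om p ^ (t * b) * Qf r b i j)"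
definition Ah where "Ah t x = (\<lambda>i j. c0 * (\<Sum>r\<in>Fpl p l. cnj (om p) ^ (t * dotp p x r) * Af t r i j))"
definition Bh where "Bh t y = (\<lambda>i j. c0 * (\<Sum>r\<in>Fpl p l. cnj (om p) ^ (t * dotp p y r) * Bf t r i j))"
definition GP where "GP r a = (SOME G. \<forall>i<n. \<forall>j<n. Pf r a i j = (\<Sum>k<n. G k i * cnj (G k j)))"
definition GQ where "GQ r b = (SOME G. \<forall>i<m. \<forall>j<m. Qf r b i j = (\<Sum>k<m. G k i * cnj (G k j)))"
definition RB where "RB t = (\<lambda>i j. (if i = j then 1 else 0) - (\<Sum>x\<in>Fpl p l. adjm n (Ah t x) i j))"
definition RC where "RC t = (\<lambda>i j. (if i = j then 1 else 0) - (\<Sum>y\<in>Fpl p l. adjm m (Bh t y) i j))"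
definition w where "w x y = (SOME w. \<forall>I<n*m. \<forall>J<n*m. Rf x y I J = (\<Sum>k<n*m. w k I * cnj (w k J)))"

lemma p0: "p > 0" using hp by auto

lemma rho_psd: "x \<in> Fpl p l \<Longrightarrow> y \<in> Fpl p l \<Longrightarrow> psd (n*m) (\<rho> x y)"
  using cq unfolding cq_state_def by blast

lemma rho_car: "x \<in> Fpl p l \<Longrightarrow> y \<in> Fpl p l \<Longrightarrow> \<rho> x y \<in> carrier_mat (n*m) (n*m)"
  using rho_psd psd_def by blast

lemma Rf_gram: assumes "x \<in> Fpl p l" "y \<in> Fpl p l"
  shows "\<forall>I<n*m. \<forall>J<n*m. Rf x y I J = (\<Sum>k<n*m. w x y k I * cnj (w x y k J))"
proof -
  have "QQ (n*m) (Rf x y)" unfolding Rf_def by (rule psd_QQ[OF rho_psd[OF assms]])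
  from gram[OF this] show ?thesis unfolding w_def by (rule someI_ex)
qed

lemma P_psd: "r \<in> Fpl p l \<Longrightarrow> a < p \<Longrightarrow> psd n (P r a)"
  using hP unfolding is_povm_def by blast
lemma Q_psd: "r \<in> Fpl p l \<Longrightarrow> b < p \<Longrightarrow> psd m (Q r b)"
  using hQ unfolding is_povm_def by blast
lemma P_car: "r \<in> Fpl p l \<Longrightarrow> a < p \<Longrightarrow> P r a \<in> carrier_mat n n"
  using P_psd psd_def by blast
lemma Q_car: "r \<in> Fpl p l \<Longrightarrow> b < p \<Longrightarrow> Q r b \<in> carrier_mat m m"
  using Q_psd psd_def by blast
lemma P_sum: "r \<in> Fpl p l \<Longrightarrow> \<forall>i<n. \<forall>j<n. (\<Sum>a<p. Pf r a i j) = (if i = j then 1 else 0)"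
  using hP unfolding is_povm_def Pf_def by blast
lemma Q_sum: "r \<in> Fpl p l \<Longrightarrow> \<forall>i<m. \<forall>j<m. (\<Sum>b<p. Qf r b i j) = (if i = j then 1 else 0)"
  using hQ unfolding is_povm_def Qf_def by blast

lemma trace_one: "(\<Sum>x\<in>Fpl p l. \<Sum>y\<in>Fpl p l. trf (n*m) (Rf x y)) = 1"
proof -
  have "(\<Sum>x\<in>Fpl p l. \<Sum>y\<in>Fpl p l. trf (n*m) (Rf x y)) = (\<Sum>x\<in>Fpl p l. \<Sum>y\<in>Fpl p l. mtrace (\<rho> x y))"
    unfolding Rf_def using mtrace_trf[OF rho_car] by (intro sum.cong refl) auto
  thus ?thesis using cq unfolding cq_state_def by simp
qed

definition V where "V t x y r r' a b = (c0 * (cnj (om p) ^ (t * dotp p x r) * om p ^ (t * a))) *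
   (c0 * (cnj (om p) ^ (t * dotp p y r') * om p ^ (t * b))) * Lf n m (Rf x y) (Pf r a) (Qf r' b)"

lemma R1: "Lf n m (Rf x y) (Ah t x) (Bh t y) = (\<Sum>r\<in>Fpl p l. \<Sum>r'\<in>Fpl p l. \<Sum>a<p. \<Sum>b<p. V t x y r r' a b)"
proof -
  have "Lf n m (Rf x y) (Ah t x) (Bh t y) = (\<Sum>r\<in>Fpl p l. \<Sum>a<p. \<Sum>r'\<in>Fpl p l. \<Sum>b<p. V t x y r r' a b)"
    unfolding Ah_def Bh_def Af_def Bf_def
    by (simp only: Lf_scal1 Lf_sum1 Lf_scal2 Lf_sum2) (simp add: V_def sum_distrib_left mult_ac)
  also have "\<dots> = (\<Sum>r\<in>Fpl p l. \<Sum>r'\<in>Fpl p l. \<Sum>a<p. \<Sum>b<p. V t x y r r' a b)"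
    by (rule sum.cong[OF refl], rule sum.swap)
  finally show ?thesis .
qed

lemma ind_sum: assumes ab: "a < p" "b < p"
  shows "(\<Sum>t<p. (cnj (om p) ^ (t * dotp p x r) * om p ^ (t * a)) * (cnj (om p) ^ (t * dotp p y r') * om p ^ (t * b)))
    = (if win_event p x y r r' a b then of_nat p else 0)"
proof -
  obtain q where q: "q = p - 1" by blast
  define K where "K = a + b + q * (dotp p x r + dotp p y r')"
  have "(cnj (om p) ^ (t * dotp p x r) * om p ^ (t * a)) * (cnj (om p) ^ (t * dotp p y r') * om p ^ (t * b)) = om p ^ (t * K)" for t
  proof -
    have "t * K = q * (t * dotp p x r) + t * a + (q * (t * dotp p y r') + t * b)" unfolding K_def by (simp add: algebra_simps)
    thus ?thesis unfolding cnj_om_pow[OF p0] q[symmetric] by (simp add: power_add)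
  qed
  hence "(\<Sum>t<p. (cnj (om p) ^ (t * dotp p x r) * om p ^ (t * a)) * (cnj (om p) ^ (t * dotp p y r') * om p ^ (t * b)))
      = (\<Sum>t<p. om p ^ (t * K))" by simp
  also have "\<dots> = (if p dvd K then of_nat p else 0)" by (rule geo_om[OF p0])
  also have "p dvd K \<longleftrightarrow> win_event p x y r r' a b"
    unfolding K_def q dvd_cong_aux[OF p0] win_iff[OF p0 ab] by simp
  finally show ?thesis .
qed

lemma c0_sq: "c0 * c0 = of_real (1 / real p ^ (2 * l))"
proof -
  have "(of_nat p :: complex) ^ (2 * l) = of_nat p ^ l * of_nat p ^ l" by (simp add: mult_2 power_add)
  thus ?thesis unfolding c0_def by simp
qed

lemma pt: assumes ab: "a < p" "b < p"
  shows "Re (of_real (1 / real p) * (\<Sum>t<p. V t x y r r' a b)) =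
    1 / real p ^ (2 * l) * (if win_event p x y r r' a b then Re (Lf n m (Rf x y) (Pf r a) (Qf r' b)) else 0)"
proof -
  have "(\<Sum>t<p. V t x y r r' a b) = c0 * c0 * (\<Sum>t<p. (cnj (om p) ^ (t * dotp p x r) * om p ^ (t * a)) * (cnj (om p) ^ (t * dotp p y r') * om p ^ (t * b))) * Lf n m (Rf x y) (Pf r a) (Qf r' b)"
    unfolding V_def by (simp add: sum_distrib_left sum_distrib_right mult_ac)
  also have "\<dots> = c0 * c0 * (if win_event p x y r r' a b then of_nat p else 0) * Lf n m (Rf x y) (Pf r a) (Qf r' b)"
    unfolding ind_sum[OF ab] ..
  finally show ?thesis unfolding c0_sq using p0 by (auto simp: Re_complex_of_real)
qed

lemma E: "win_prob p l \<rho> P Q = 1 / real p * (\<Sum>t<p. Re (\<Sum>x\<in>Fpl p l. \<Sum>y\<in>Fpl p l. Lf n m (Rf x y) (Ah t x) (Bh t y)))"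
proof -
  let ?F = "Fpl p l"
  have "1 / real p * (\<Sum>t<p. Re (\<Sum>x\<in>?F. \<Sum>y\<in>?F. Lf n m (Rf x y) (Ah t x) (Bh t y)))
     = Re (of_real (1 / real p) * (\<Sum>t<p. \<Sum>x\<in>?F. \<Sum>y\<in>?F. \<Sum>r\<in>?F. \<Sum>r'\<in>?F. \<Sum>a<p. \<Sum>b<p. V t x y r r' a b))"
    unfolding R1 by (simp add: Re_sum)
  also have "\<dots> = Re (\<Sum>x\<in>?F. \<Sum>y\<in>?F. \<Sum>r\<in>?F. \<Sum>r'\<in>?F. \<Sum>a<p. \<Sum>b<p. of_real (1 / real p) * (\<Sum>t<p. V t x y r r' a b))"
    by (subst swap_T_in) (simp only: sum_distrib_left)
  also have "\<dots> = (\<Sum>x\<in>?F. \<Sum>y\<in>?F. \<Sum>r\<in>?F. \<Sum>r'\<in>?F. \<Sum>a<p. \<Sum>b<p. Re (of_real (1 / real p) * (\<Sum>t<p. V t x y r r' a b)))"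
    by (simp only: Re_sum)
  also have "\<dots> = (\<Sum>x\<in>?F. \<Sum>y\<in>?F. \<Sum>r\<in>?F. \<Sum>r'\<in>?F. \<Sum>a<p. \<Sum>b<p.
      1 / real p ^ (2 * l) * (if win_event p x y r r' a b then Re (Lf n m (Rf x y) (Pf r a) (Qf r' b)) else 0))"
    by (intro sum.cong refl, rule pt) auto
  also have "\<dots> = win_prob p l \<rho> P Q"
    unfolding win_prob_def
  proof (intro sum.cong refl)
    fix x y r r' assume xy: "x \<in> ?F" "y \<in> ?F" "r \<in> ?F" "r' \<in> ?F"
    have "mtrace (kron (P r a) (Q r' b) * \<rho> x y) = Lf n m (Rf x y) (Pf r a) (Qf r' b)" if "a < p" "b < p" for a b
      unfolding Rf_def Pf_def Qf_def by (rule mtrace_kron[OF P_car[OF xy(3) that(1)] Q_car[OF xy(4) that(2)] rho_car[OF xy(1,2)]])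
    thus "(\<Sum>a<p. \<Sum>b<p. 1 / real p ^ (2 * l) * (if win_event p x y r r' a b then Re (Lf n m (Rf x y) (Pf r a) (Qf r' b)) else 0)) =
      1 / real p ^ (2 * l) * (\<Sum>a<p. \<Sum>b<p. if win_event p x y r r' a b then Re (mtrace (kron (P r a) (Q r' b) * \<rho> x y)) else 0)"
      by (auto simp: sum_distrib_left intro!: sum.cong)
  qed
  finally show ?thesis ..
qed

lemma Ah0: "\<forall>i<n. \<forall>j<n. Ah 0 x i j = (if i = j then 1 else 0)"
proof (intro allI impI)
  fix i j assume ij: "i < n" "j < n"
  have "Ah 0 x i j = c0 * (\<Sum>r\<in>Fpl p l. (if i = j then 1 else 0))"
    unfolding Ah_def Af_def using P_sum ij by (auto intro!: sum.cong)
  also have "\<dots> = (if i = j then 1 else 0)" unfolding c0_def using p0 by (simp add: card_Fpl)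
  finally show "Ah 0 x i j = (if i = j then 1 else 0)" .
qed

lemma Bh0: "\<forall>i<m. \<forall>j<m. Bh 0 y i j = (if i = j then 1 else 0)"
proof (intro allI impI)
  fix i j assume ij: "i < m" "j < m"
  have "Bh 0 y i j = c0 * (\<Sum>r\<in>Fpl p l. (if i = j then 1 else 0))"
    unfolding Bh_def Bf_def using Q_sum ij by (auto intro!: sum.cong)
  also have "\<dots> = (if i = j then 1 else 0)" unfolding c0_def using p0 by (simp add: card_Fpl)
  finally show "Bh 0 y i j = (if i = j then 1 else 0)" .
qed

lemma T0: "(\<Sum>x\<in>Fpl p l. \<Sum>y\<in>Fpl p l. Lf n m (Rf x y) (Ah 0 x) (Bh 0 y)) = 1"
proof -
  have "Lf n m (Rf x y) (Ah 0 x) (Bh 0 y) = trf (n*m) (Rf x y)" for x y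
    using Lf_cong[OF Ah0[of x] Bh0[of y], of "Rf x y"] Lf_delta by simp
  thus ?thesis using trace_one by simp
qed

lemma c0_real: "cnj c0 = c0" unfolding c0_def by simp

lemma parseval: assumes t: "0 < t" "t < p"
  shows "(\<Sum>x\<in>Fpl p l. adjm n (Ah t x) i j) = c0 * (\<Sum>r\<in>Fpl p l. adjm n (Af t r) i j)"
proof -
  let ?F = "Fpl p l"
  let ?g = "\<lambda>x k r r'. c0 * c0 * ((om p ^ (t * dotp p x r) * cnj (om p) ^ (t * dotp p x r')) * (cnj (Af t r k i) * Af t r' k j))"
  have "(\<Sum>x\<in>?F. adjm n (Ah t x) i j) = (\<Sum>x\<in>?F. \<Sum>k<n. \<Sum>r\<in>?F. \<Sum>r'\<in>?F. ?g x k r r')"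
    unfolding adjm_def Ah_def using c0_real
    by (simp add: sum_product sum_distrib_left mult_ac)
  also have "\<dots> = (\<Sum>k<n. \<Sum>r\<in>?F. \<Sum>r'\<in>?F. \<Sum>x\<in>?F. ?g x k r r')" by (rule swap4)
  also have "\<dots> = (\<Sum>k<n. \<Sum>r\<in>?F. \<Sum>r'\<in>?F. c0 * c0 * (if r = r' then of_nat (p ^ l) else 0) * (cnj (Af t r k i) * Af t r' k j))"
  proof (intro sum.cong refl)
    fix k r r' assume r: "r \<in> ?F" "r' \<in> ?F"
    have "(\<Sum>x\<in>?F. ?g x k r r') = c0 * c0 * (\<Sum>x\<in>?F. om p ^ (t * dotp p x r) * cnj (om p) ^ (t * dotp p x r')) * (cnj (Af t r k i) * Af t r' k j)"
      by (simp add: sum_distrib_left sum_distrib_right mult_ac)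
    thus "(\<Sum>x\<in>?F. ?g x k r r') = c0 * c0 * (if r = r' then of_nat (p ^ l) else 0) * (cnj (Af t r k i) * Af t r' k j)"
      unfolding char_orth[OF hp t r] .
  qed
  also have "\<dots> = (\<Sum>k<n. \<Sum>r\<in>?F. c0 * (cnj (Af t r k i) * Af t r k j))"
  proof (intro sum.cong refl)
    fix k r assume r: "r \<in> ?F"
    have "c0 * c0 * of_nat (p ^ l) = c0" unfolding c0_def using p0 by simp
    thus "(\<Sum>r'\<in>?F. c0 * c0 * (if r = r' then of_nat (p ^ l) else 0) * (cnj (Af t r k i) * Af t r' k j)) = c0 * (cnj (Af t r k i) * Af t r k j)"
      using r Fpl_finite by (simp add: ifz sum.delta)
  qed
  also have "\<dots> = c0 * (\<Sum>r\<in>?F. adjm n (Af t r) i j)"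
    unfolding adjm_def by (simp add: sum_distrib_left sum.swap[of _ "{..<n}"])
  finally show ?thesis .
qed

lemma parsevalB: assumes t: "0 < t" "t < p"
  shows "(\<Sum>x\<in>Fpl p l. adjm m (Bh t x) i j) = c0 * (\<Sum>r\<in>Fpl p l. adjm m (Bf t r) i j)"
proof -
  let ?F = "Fpl p l"
  let ?g = "\<lambda>x k r r'. c0 * c0 * ((om p ^ (t * dotp p x r) * cnj (om p) ^ (t * dotp p x r')) * (cnj (Bf t r k i) * Bf t r' k j))"
  have "(\<Sum>x\<in>?F. adjm m (Bh t x) i j) = (\<Sum>x\<in>?F. \<Sum>k<m. \<Sum>r\<in>?F. \<Sum>r'\<in>?F. ?g x k r r')"
    unfolding adjm_def Bh_def using c0_real
    by (simp add: sum_product sum_distrib_left mult_ac)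
  also have "\<dots> = (\<Sum>k<m. \<Sum>r\<in>?F. \<Sum>r'\<in>?F. \<Sum>x\<in>?F. ?g x k r r')" by (rule swap4)
  also have "\<dots> = (\<Sum>k<m. \<Sum>r\<in>?F. \<Sum>r'\<in>?F. c0 * c0 * (if r = r' then of_nat (p ^ l) else 0) * (cnj (Bf t r k i) * Bf t r' k j))"
  proof (intro sum.cong refl)
    fix k r r' assume r: "r \<in> ?F" "r' \<in> ?F"
    have "(\<Sum>x\<in>?F. ?g x k r r') = c0 * c0 * (\<Sum>x\<in>?F. om p ^ (t * dotp p x r) * cnj (om p) ^ (t * dotp p x r')) * (cnj (Bf t r k i) * Bf t r' k j)"
      by (simp add: sum_distrib_left sum_distrib_right mult_ac)
    thus "(\<Sum>x\<in>?F. ?g x k r r') = c0 * c0 * (if r = r' then of_nat (p ^ l) else 0) * (cnj (Bf t r k i) * Bf t r' k j)"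
      unfolding char_orth[OF hp t r] .
  qed
  also have "\<dots> = (\<Sum>k<m. \<Sum>r\<in>?F. c0 * (cnj (Bf t r k i) * Bf t r k j))"
  proof (intro sum.cong refl)
    fix k r assume r: "r \<in> ?F"
    have "c0 * c0 * of_nat (p ^ l) = c0" unfolding c0_def using p0 by simp
    thus "(\<Sum>r'\<in>?F. c0 * c0 * (if r = r' then of_nat (p ^ l) else 0) * (cnj (Bf t r k i) * Bf t r' k j)) = c0 * (cnj (Bf t r k i) * Bf t r k j)"
      using r Fpl_finite by (simp add: ifz sum.delta)
  qed
  also have "\<dots> = c0 * (\<Sum>r\<in>?F. adjm m (Bf t r) i j)"
    unfolding adjm_def by (simp add: sum_distrib_left sum.swap[of _ "{..<m}"])
  finally show ?thesis .
qed

lemma GP_gram: assumes "r \<in> Fpl p l" "a < p"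
  shows "\<forall>i<n. \<forall>j<n. Pf r a i j = (\<Sum>k<n. GP r a k i * cnj (GP r a k j))"
proof -
  have "QQ n (Pf r a)" unfolding Pf_def by (rule psd_QQ[OF P_psd[OF assms]])
  from gram[OF this] show ?thesis unfolding GP_def by (rule someI_ex)
qed

lemma GQ_gram: assumes "r \<in> Fpl p l" "b < p"
  shows "\<forall>i<m. \<forall>j<m. Qf r b i j = (\<Sum>k<m. GQ r b k i * cnj (GQ r b k j))"
proof -
  have "QQ m (Qf r b)" unfolding Qf_def by (rule psd_QQ[OF Q_psd[OF assms]])
  from gram[OF this] show ?thesis unfolding GQ_def by (rule someI_ex)
qed

lemma kadA: assumes r: "r \<in> Fpl p l"
  shows "qf n (adjm n (Af t r)) f = of_real (Re (qf n (adjm n (Af t r)) f)) \<and> 0 \<le> Re (qf n (adjm n (Af t r)) f)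
     \<and> Re (qf n (adjm n (Af t r)) f) \<le> (\<Sum>j<n. (cmod (f j))\<^sup>2)"
proof -
  have "(\<Sum>k<n. (cmod (\<Sum>j<n. (\<Sum>a<p. om p ^ (t * a) * Pf r a k j) * f j))\<^sup>2) \<le> (\<Sum>j<n. (cmod (f j))\<^sup>2)"
    by (rule kadison[where G="\<lambda>a. GP r a"]) (use GP_gram[OF r] P_sum[OF r] in \<open>auto simp: norm_power\<close>)
  thus ?thesis unfolding qf_adjm Af_def by (auto intro: sum_nonneg)
qed

lemma kadB: assumes r: "r \<in> Fpl p l"
  shows "qf m (adjm m (Bf t r)) f = of_real (Re (qf m (adjm m (Bf t r)) f)) \<and> 0 \<le> Re (qf m (adjm m (Bf t r)) f)
     \<and> Re (qf m (adjm m (Bf t r)) f) \<le> (\<Sum>j<m. (cmod (f j))\<^sup>2)"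
proof -
  have "(\<Sum>k<m. (cmod (\<Sum>j<m. (\<Sum>b<p. om p ^ (t * b) * Qf r b k j) * f j))\<^sup>2) \<le> (\<Sum>j<m. (cmod (f j))\<^sup>2)"
    by (rule kadison[where G="\<lambda>b. GQ r b"]) (use GQ_gram[OF r] Q_sum[OF r] in \<open>auto simp: norm_power\<close>)
  thus ?thesis unfolding qf_adjm Bf_def by (auto intro: sum_nonneg)
qed

lemma qf_minus: "qf d (\<lambda>i j. A i j - B i j) f = qf d A f - qf d B f"
  unfolding qf_def by (simp add: algebra_simps sum_subtractf)

lemma QQ_RB: assumes t: "0 < t" "t < p" shows "QQ n (RB t)"
  unfolding QQ_def
proof
  fix f
  let ?F = "Fpl p l"
  define N where "N = (\<Sum>j<n. (cmod (f j))\<^sup>2)"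
  define sr where "sr = (\<lambda>r. Re (qf n (adjm n (Af t r)) f))"
  have "qf n (\<lambda>i j. \<Sum>x\<in>?F. adjm n (Ah t x) i j) f = qf n (\<lambda>i j. c0 * (\<Sum>r\<in>?F. adjm n (Af t r) i j)) f"
    by (rule qf_cong) (simp add: parseval[OF t])
  also have "\<dots> = c0 * (\<Sum>r\<in>?F. qf n (adjm n (Af t r)) f)"
    by (simp only: qf_scal qf_sum)
  also have "\<dots> = of_real (1 / real p ^ l * (\<Sum>r\<in>?F. sr r))"
    unfolding c0_def sr_def using kadA by (simp add: of_real_sum)
  finally have e: "qf n (RB t) f = of_real (N - 1 / real p ^ l * (\<Sum>r\<in>?F. sr r))"
    unfolding RB_def qf_minus qf_delta N_def by simp
  have "(\<Sum>r\<in>?F. sr r) \<le> of_nat (card ?F) * N"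
    using kadA unfolding sr_def N_def by (intro sum_bounded_above) auto
  hence "1 / real p ^ l * (\<Sum>r\<in>?F. sr r) \<le> N" using p0 by (simp add: card_Fpl field_simps)
  thus "qf n (RB t) f \<in> \<real> \<and> 0 \<le> Re (qf n (RB t) f)" unfolding e by simp
qed

lemma QQ_RC: assumes t: "0 < t" "t < p" shows "QQ m (RC t)"
  unfolding QQ_def
proof
  fix f
  let ?F = "Fpl p l"
  define N where "N = (\<Sum>j<m. (cmod (f j))\<^sup>2)"
  define sr where "sr = (\<lambda>r. Re (qf m (adjm m (Bf t r)) f))"
  have "qf m (\<lambda>i j. \<Sum>x\<in>?F. adjm m (Bh t x) i j) f = qf m (\<lambda>i j. c0 * (\<Sum>r\<in>?F. adjm m (Bf t r) i j)) f"
    by (rule qf_cong) (simp add: parsevalB[OF t])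
  also have "\<dots> = c0 * (\<Sum>r\<in>?F. qf m (adjm m (Bf t r)) f)"
    by (simp only: qf_scal qf_sum)
  also have "\<dots> = of_real (1 / real p ^ l * (\<Sum>r\<in>?F. sr r))"
    unfolding c0_def sr_def using kadB by (simp add: of_real_sum)
  finally have e: "qf m (RC t) f = of_real (N - 1 / real p ^ l * (\<Sum>r\<in>?F. sr r))"
    unfolding RC_def qf_minus qf_delta N_def by simp
  have "(\<Sum>r\<in>?F. sr r) \<le> of_nat (card ?F) * N"
    using kadB unfolding sr_def N_def by (intro sum_bounded_above) auto
  hence "1 / real p ^ l * (\<Sum>r\<in>?F. sr r) \<le> N" using p0 by (simp add: card_Fpl field_simps)
  thus "qf m (RC t) f \<in> \<real> \<and> 0 \<le> Re (qf m (RC t) f)" unfolding e by simp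
qed

definition x0 :: "nat list" where "x0 = replicate l 0"
lemma x0F: "x0 \<in> Fpl p l" unfolding x0_def using Fpl_ne p0 by blast

definition MB where "MB t x = mat n n (\<lambda>(i,j). adjm n (Ah t x) i j + (if x = x0 then RB t i j else 0))"
definition NC where "NC t y = mat m m (\<lambda>(i,j). adjm m (Bh t y) i j + (if y = x0 then RC t i j else 0))"

lemma QQ_zero_fun: "QQ d (\<lambda>i j. 0)" unfolding QQ_def qf_def by simp

lemma QQ_if: "(C \<Longrightarrow> QQ d B) \<Longrightarrow> QQ d (\<lambda>i j. if C then B i j else 0)"
  by (cases C) (auto simp: QQ_zero_fun)

lemma QQ_MBf: "0 < t \<Longrightarrow> t < p \<Longrightarrow> QQ n (\<lambda>i j. adjm n (Ah t x) i j + (if x = x0 then RB t i j else 0))"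
  by (intro QQ_add QQ_adjm QQ_if QQ_RB)
lemma QQ_NCf: "0 < t \<Longrightarrow> t < p \<Longrightarrow> QQ m (\<lambda>i j. adjm m (Bh t y) i j + (if y = x0 then RC t i j else 0))"
  by (intro QQ_add QQ_adjm QQ_if QQ_RC)

lemma povmB: assumes t: "0 < t" "t < p" shows "is_povm n (Fpl p l) (MB t)"
  unfolding is_povm_def
proof (intro conjI ballI allI impI Fpl_finite)
  fix x show "psd n (MB t x)"
    by (rule QQ_psd) (auto simp: MB_def intro: QQ_cong[OF QQ_MBf[OF t]])
next
  fix i j assume ij: "i < n" "j < n"
  have "(\<Sum>x\<in>Fpl p l. MB t x $$ (i, j)) = (\<Sum>x\<in>Fpl p l. adjm n (Ah t x) i j) + RB t i j"
    unfolding MB_def using ij x0F Fpl_finite by (simp add: sum.distrib sum.delta)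
  thus "(\<Sum>x\<in>Fpl p l. MB t x $$ (i, j)) = (if i = j then 1 else 0)" unfolding RB_def by simp
qed

lemma povmC: assumes t: "0 < t" "t < p" shows "is_povm m (Fpl p l) (NC t)"
  unfolding is_povm_def
proof (intro conjI ballI allI impI Fpl_finite)
  fix y show "psd m (NC t y)"
    by (rule QQ_psd) (auto simp: NC_def intro: QQ_cong[OF QQ_NCf[OF t]])
next
  fix i j assume ij: "i < m" "j < m"
  have "(\<Sum>y\<in>Fpl p l. NC t y $$ (i, j)) = (\<Sum>y\<in>Fpl p l. adjm m (Bh t y) i j) + RC t i j"
    unfolding NC_def using ij x0F Fpl_finite by (simp add: sum.distrib sum.delta)
  thus "(\<Sum>y\<in>Fpl p l. NC t y $$ (i, j)) = (if i = j then 1 else 0)" unfolding RC_def by simp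
qed

lemma guess_Lf: assumes M: "is_povm n (Fpl p l) M" and N: "is_povm m (Fpl p l) N"
  shows "guess_prob p l \<rho> M N = (\<Sum>x\<in>Fpl p l. \<Sum>y\<in>Fpl p l. Re (Lf n m (Rf x y) (\<lambda>i j. M x $$ (i,j)) (\<lambda>i j. N y $$ (i,j))))"
  unfolding guess_prob_def
proof (intro sum.cong refl)
  fix x y assume xy: "x \<in> Fpl p l" "y \<in> Fpl p l"
  have "M x \<in> carrier_mat n n" using M xy unfolding is_povm_def psd_def by blast
  moreover have "N y \<in> carrier_mat m m" using N xy unfolding is_povm_def psd_def by blast
  ultimately show "Re (mtrace (kron (M x) (N y) * \<rho> x y)) = Re (Lf n m (Rf x y) (\<lambda>i j. M x $$ (i,j)) (\<lambda>i j. N y $$ (i,j)))"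
    unfolding Rf_def using mtrace_kron rho_car[OF xy] by metis
qed

lemma guess_le1: assumes M: "is_povm n (Fpl p l) M" and N: "is_povm m (Fpl p l) N"
  shows "guess_prob p l \<rho> M N \<le> 1"
proof -
  let ?F = "Fpl p l"
  let ?g = "\<lambda>x y x' y'. Re (Lf n m (Rf x y) (\<lambda>i j. M x' $$ (i,j)) (\<lambda>i j. N y' $$ (i,j)))"
  have QM: "QQ n (\<lambda>i j. M x' $$ (i,j))" if "x' \<in> ?F" for x' using M that unfolding is_povm_def by (auto intro: psd_QQ)
  have QN: "QQ m (\<lambda>i j. N y' $$ (i,j))" if "y' \<in> ?F" for y' using N that unfolding is_povm_def by (auto intro: psd_QQ)
  have nn: "0 \<le> ?g x y x' y'" if "x \<in> ?F" "y \<in> ?F" "x' \<in> ?F" "y' \<in> ?F" for x y x' y'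
    using Lf_nonneg[OF Rf_gram QM QN] that by blast
  have "?g x y x y \<le> (\<Sum>x'\<in>?F. \<Sum>y'\<in>?F. ?g x y x' y')" if xy: "x \<in> ?F" "y \<in> ?F" for x y
  proof -
    have "?g x y x y \<le> (\<Sum>y'\<in>?F. ?g x y x y')" using nn xy Fpl_finite by (intro member_le_sum) auto
    also have "\<dots> \<le> (\<Sum>x'\<in>?F. \<Sum>y'\<in>?F. ?g x y x' y')"
      using nn xy Fpl_finite by (intro member_le_sum[where f="\<lambda>x'. \<Sum>y'\<in>?F. ?g x y x' y'"] sum_nonneg) auto
    finally show ?thesis .
  qed
  moreover have "(\<Sum>x'\<in>?F. \<Sum>y'\<in>?F. ?g x y x' y') = Re (trf (n*m) (Rf x y))" for x y
  proof -
    have "(\<Sum>x'\<in>?F. \<Sum>y'\<in>?F. ?g x y x' y') = Re (Lf n m (Rf x y) (\<lambda>i j. \<Sum>x'\<in>?F. M x' $$ (i,j)) (\<lambda>i j. \<Sum>y'\<in>?F. N y' $$ (i,j)))"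
      by (simp only: Lf_sum1 Lf_sum2 Re_sum)
    also have "\<dots> = Re (Lf n m (Rf x y) (\<lambda>i j. if i = j then 1 else 0) (\<lambda>i j. if i = j then 1 else 0))"
      using M N unfolding is_povm_def by (intro arg_cong[where f=Re] Lf_cong) auto
    finally show ?thesis by (simp add: Lf_delta)
  qed
  ultimately have "guess_prob p l \<rho> M N \<le> (\<Sum>x\<in>?F. \<Sum>y\<in>?F. Re (trf (n*m) (Rf x y)))"
    unfolding guess_Lf[OF M N] by (intro sum_mono) auto
  also have "\<dots> = 1" using trace_one by (simp flip: Re_sum)
  finally show ?thesis .
qed

lemma S_le_guess: assumes t: "0 < t" "t < p"
  shows "(\<Sum>x\<in>Fpl p l. \<Sum>y\<in>Fpl p l. Re (Lf n m (Rf x y) (adjm n (Ah t x)) (adjm m (Bh t y)))) \<le> guess_prob p l \<rho> (MB t) (NC t)"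
  unfolding guess_Lf[OF povmB[OF t] povmC[OF t]]
proof (intro sum_mono)
  fix x y assume xy: "x \<in> Fpl p l" "y \<in> Fpl p l"
  let ?A = "adjm n (Ah t x)" and ?B = "adjm m (Bh t y)"
  let ?eA = "\<lambda>i j. if x = x0 then RB t i j else 0" and ?eB = "\<lambda>i j. if y = x0 then RC t i j else 0"
  have "Lf n m (Rf x y) (\<lambda>i j. MB t x $$ (i,j)) (\<lambda>i j. NC t y $$ (i,j)) = Lf n m (Rf x y) (\<lambda>i j. ?A i j + ?eA i j) (\<lambda>i j. ?B i j + ?eB i j)"
    unfolding MB_def NC_def by (intro Lf_cong) auto
  also have "\<dots> = Lf n m (Rf x y) ?A ?B + Lf n m (Rf x y) ?A ?eB + Lf n m (Rf x y) ?eA (\<lambda>i j. ?B i j + ?eB i j)"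
    by (simp only: Lf_add1 Lf_add2)
  finally have e: "Re (Lf n m (Rf x y) (\<lambda>i j. MB t x $$ (i,j)) (\<lambda>i j. NC t y $$ (i,j))) =
    Re (Lf n m (Rf x y) ?A ?B) + Re (Lf n m (Rf x y) ?A ?eB) + Re (Lf n m (Rf x y) ?eA (\<lambda>i j. ?B i j + ?eB i j))" by simp
  have "0 \<le> Re (Lf n m (Rf x y) ?A ?eB)"
    using Lf_nonneg[OF Rf_gram[OF xy] QQ_adjm QQ_if[OF QQ_RC[OF t]]] by blast
  moreover have "0 \<le> Re (Lf n m (Rf x y) ?eA (\<lambda>i j. ?B i j + ?eB i j))"
    using Lf_nonneg[OF Rf_gram[OF xy] QQ_if[OF QQ_RB[OF t]] QQ_NCf[OF t]] by blast
  ultimately show "Re (Lf n m (Rf x y) ?A ?B) \<le> Re (Lf n m (Rf x y) (\<lambda>i j. MB t x $$ (i,j)) (\<lambda>i j. NC t y $$ (i,j)))"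
    unfolding e by simp
qed

lemma Tt: "Re (\<Sum>x\<in>Fpl p l. \<Sum>y\<in>Fpl p l. Lf n m (Rf x y) (Ah t x) (Bh t y))
    \<le> sqrt (\<Sum>x\<in>Fpl p l. \<Sum>y\<in>Fpl p l. Re (Lf n m (Rf x y) (adjm n (Ah t x)) (adjm m (Bh t y))))"
proof -
  let ?F = "Fpl p l"
  let ?I = "?F \<times> ?F"
  define L where "L = (\<lambda>(x,y). Lf n m (Rf x y) (Ah t x) (Bh t y))"
  define tr where "tr = (\<lambda>(x,y). Re (trf (n*m) (Rf x y)))"
  define S where "S = (\<lambda>(x,y). Re (Lf n m (Rf x y) (adjm n (Ah t x)) (adjm m (Bh t y))))"
  have trn: "0 \<le> tr i" if "i \<in> ?I" for i
    using that trf_gram[OF Rf_gram] unfolding tr_def by (auto intro!: sum_nonneg)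
  have Sn: "0 \<le> S i" if "i \<in> ?I" for i
    using that Lf_adj_gram[OF Rf_gram] unfolding S_def by (auto intro!: sum_nonneg)
  have cs: "cmod (L i) \<le> sqrt (tr i) * sqrt (S i)" if hi: "i \<in> ?I" for i
  proof -
    obtain x y where i: "i = (x,y)" "x \<in> ?F" "y \<in> ?F" using hi by (cases i) auto
    have "(cmod (L i))\<^sup>2 \<le> tr i * S i" unfolding L_def tr_def S_def i(1) using Lf_CS[OF Rf_gram[OF i(2,3)]] by simp
    hence "cmod (L i) \<le> sqrt (tr i * S i)" by (rule real_le_rsqrt)
    thus ?thesis by (simp add: real_sqrt_mult)
  qed
  have "Re (\<Sum>x\<in>?F. \<Sum>y\<in>?F. Lf n m (Rf x y) (Ah t x) (Bh t y)) = Re (\<Sum>i\<in>?I. L i)"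
    unfolding L_def sum_prod_nested by simp
  also have "\<dots> \<le> cmod (\<Sum>i\<in>?I. L i)" by (rule complex_Re_le_cmod)
  also have "\<dots> \<le> (\<Sum>i\<in>?I. cmod (L i))" by (rule norm_sum)
  also have "\<dots> \<le> (\<Sum>i\<in>?I. sqrt (tr i) * sqrt (S i))" by (rule sum_mono[OF cs])
  also have "\<dots> \<le> sqrt ((\<Sum>i\<in>?I. (sqrt (tr i))\<^sup>2) * (\<Sum>i\<in>?I. (sqrt (S i))\<^sup>2))"
    by (rule real_le_rsqrt, rule real_CS)
  also have "(\<Sum>i\<in>?I. (sqrt (tr i))\<^sup>2) = (\<Sum>i\<in>?I. tr i)" using trn by (intro sum.cong) auto
  also have "(\<Sum>i\<in>?I. (sqrt (S i))\<^sup>2) = (\<Sum>i\<in>?I. S i)" using Sn by (intro sum.cong) auto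
  also have "(\<Sum>i\<in>?I. tr i) = 1"
  proof -
    have "(\<Sum>i\<in>?I. tr i) = Re (\<Sum>x\<in>?F. \<Sum>y\<in>?F. trf (n*m) (Rf x y))"
      unfolding tr_def sum_prod_nested by (simp add: Re_sum)
    thus ?thesis using trace_one by simp
  qed
  also have "(\<Sum>i\<in>?I. S i) = (\<Sum>x\<in>?F. \<Sum>y\<in>?F. Re (Lf n m (Rf x y) (adjm n (Ah t x)) (adjm m (Bh t y))))"
    unfolding S_def sum_prod_nested by simp
  finally show ?thesis by simp
qed

lemma main_bound:
  assumes hg: "\<forall>M N. is_povm n (Fpl p l) M \<longrightarrow> is_povm m (Fpl p l) N \<longrightarrow> guess_prob p l \<rho> M N \<le> \<delta>"
  shows "win_prob p l \<rho> P Q \<le> 1 / real p + 1 * \<delta> powr (1/3)"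
proof -
  let ?F = "Fpl p l"
  define f where "f = (\<lambda>t. Re (\<Sum>x\<in>?F. \<Sum>y\<in>?F. Lf n m (Rf x y) (Ah t x) (Bh t y)))"
  define S where "S = (\<lambda>t. \<Sum>x\<in>?F. \<Sum>y\<in>?F. Re (Lf n m (Rf x y) (adjm n (Ah t x)) (adjm m (Bh t y))))"
  define s where "s = sqrt (min \<delta> 1)"
  have Sn: "0 \<le> S t" for t
    unfolding S_def using Lf_adj_gram[OF Rf_gram] by (auto intro!: sum_nonneg)
  have Sd: "S t \<le> \<delta>" "S t \<le> 1" if t: "0 < t" "t < p" for t
    using S_le_guess[OF t] hg povmB[OF t] povmC[OF t] guess_le1[OF povmB[OF t] povmC[OF t]] unfolding S_def by fastforce+
  have d0: "0 \<le> \<delta>" using Sd(1)[of 1] Sn[of 1] hp by fastforce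
  have ft: "f t \<le> s" if t: "0 < t" "t < p" for t
  proof -
    have "f t \<le> sqrt (S t)" unfolding f_def S_def by (rule Tt)
    also have "\<dots> \<le> s" unfolding s_def using Sd[OF t] by simp
    finally show ?thesis .
  qed
  have f0: "f 0 = 1" unfolding f_def T0 by simp
  obtain q where q: "p = Suc q" using p0 by (cases p) auto
  have "win_prob p l \<rho> P Q = 1 / real p * (\<Sum>t<p. f t)" unfolding E f_def ..
  also have "(\<Sum>t<p. f t) = 1 + (\<Sum>t<q. f (Suc t))" unfolding q sum.lessThan_Suc_shift f0 ..
  also have "(\<Sum>t<q. f (Suc t)) \<le> (\<Sum>t<q. s)" using ft q by (intro sum_mono) auto
  also have "(\<Sum>t<q. s) = real q * s" by simp
  finally have w: "win_prob p l \<rho> P Q \<le> (1 + real q * s) / real p" using p0 by (simp add: divide_right_mono)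
  have s0: "0 \<le> s" unfolding s_def using d0 by simp
  have "(1 + real q * s) / real p \<le> 1 / real p + s"
  proof -
    have "real q * s \<le> s * real p" using q s0 by (simp add: algebra_simps)
    hence "real q * s / real p \<le> s" using p0 by (simp add: pos_divide_le_eq)
    thus ?thesis by (simp add: add_divide_distrib)
  qed
  moreover have "s \<le> \<delta> powr (1/3)"
  proof (cases "\<delta> \<le> 1")
    case True
    hence "s = \<delta> powr (1/2)" unfolding s_def using d0 by (simp add: powr_half_sqrt)
    also have "\<dots> \<le> \<delta> powr (1/3)" using True d0 by (intro powr_mono') auto
    finally show ?thesis .
  next
    case False
    hence "s = 1" unfolding s_def by simp
    also have "1 \<le> \<delta> powr (1/3)" using False by (intro ge_one_powr_ge_zero) auto
    finally show ?thesis .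
  qed
  ultimately show ?thesis using w by simp
qed

end

theorem lemma31:
  shows "\<exists>C::real. \<forall>(p::nat) (l::nat) (dB::nat) (dC::nat) \<rho> (\<delta>::real) P Q.
    p \<in> {2, 3} \<longrightarrow>
    cq_state p l dB dC \<rho> \<longrightarrow>
    (\<forall>M N. is_povm dB (Fpl p l) M \<longrightarrow> is_povm dC (Fpl p l) N \<longrightarrow>
        guess_prob p l \<rho> M N \<le> \<delta>) \<longrightarrow>
    (\<forall>rB \<in> Fpl p l. is_povm dB {..<p} (P rB)) \<longrightarrow>
    (\<forall>rC \<in> Fpl p l. is_povm dC {..<p} (Q rC)) \<longrightarrow>
    win_prob p l \<rho> P Q \<le> 1 / real p + C * \<delta> powr (1/3)"
proof (intro exI[of _ 1] allI impI)
  fix p l dB dC :: nat and \<rho> :: "nat list \<Rightarrow> nat list \<Rightarrow> complex mat" and \<delta> :: real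
    and P Q :: "nat list \<Rightarrow> nat \<Rightarrow> complex mat"
  assume a1: "p \<in> {2, 3}" and a2: "cq_state p l dB dC \<rho>"
    and a3: "\<forall>M N. is_povm dB (Fpl p l) M \<longrightarrow> is_povm dC (Fpl p l) N \<longrightarrow> guess_prob p l \<rho> M N \<le> \<delta>"
    and a4: "\<forall>rB \<in> Fpl p l. is_povm dB {..<p} (P rB)"
    and a5: "\<forall>rC \<in> Fpl p l. is_povm dC {..<p} (Q rC)"
  interpret LS p l dB dC \<rho> P Q
    using a1 a2 a4 a5 by unfold_locales auto
  show "win_prob p l \<rho> P Q \<le> 1 / real p + 1 * \<delta> powr (1/3)"
    by (rule main_bound[OF a3])
qed

end
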